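(* Let $\xi$ be a real random variable with mean zero and variance one, let $A,C>0$ be arbitrary constants, let $K$ be a fixed positive integer, and let $r>0$ be a fixed constant. Let $d\in\{1,2,4\}$ and for $1\le i\le n$ let $\mathbf w_i\in\mathbb R^d$ be one of: (d=1) $\mathbf w_i=b_i(x)$ with $x\in I_W$; (d=2) $\mathbf w_i=(b_i(x),c_i(x))$ with $x\in I_W$; (d=4) $\mathbf w_i=(b_i(x),c_i(x),b_i(y),c_i(y))$ with $x,y\in I_W$, $|x-y|\ge N^{\varepsilon_g}$ for a fixed constant $0<\varepsilon_g<1/2$. Let $\phi_i(\eta)=\mathbb E\exp(\mathrm i\,\xi\langle\mathbf w_i,\eta\rangle)$ for $\eta\in\mathbb R^d$. Then, provided $N$ is sufficiently large, for every index set $I\subset\{1,\dots,n\}$ with $|I|\le K$ and every $\eta\in\mathbb R^d$ with $r\le\|\eta\|_2^2\le N^{A}$, \[\Big|\prod_{i\notin I}\phi_i(\eta)\Big|\le N^{-C}.\]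
   Context: Let $0<c_1<c_2$ be constants, $n$ a large integer and $M$ a large parameter (possibly growing with $n$) with $I_W:=[c_1M,c_2M]\subset[0,\sqrt n-M]$; set $N:=M$. For $x>0$ and $1\le i\le n$ let $b_i(x)=\sqrt N\,e^{-x^2/2}\,x^i/\sqrt{i!}$ and $c_i(x)=b_i'(x)=\sqrt N\,e^{-x^2/2}\,\frac{i-x^2}{x}\,\frac{x^i}{\sqrt{i!}}$. These are the step vectors of the random walks $\sum_{i=1}^n\xi_i\mathbf w_i$ associated to Weyl polynomials. *)

theory Defs
  imports "HOL-Probability.Probability"
begin

definition weyl_b :: "real \<Rightarrow> nat \<Rightarrow> real \<Rightarrow> real" where
  "weyl_b N i x = sqrt N * exp (- (x^2) / 2) * x ^ i / sqrt (fact i)"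

definition weyl_c :: "real \<Rightarrow> nat \<Rightarrow> real \<Rightarrow> real" where
  "weyl_c N i x = sqrt N * exp (- (x^2) / 2) * ((real i - x^2) / x) * x ^ i / sqrt (fact i)"

text \<open>Step vector w_i, components indexed by j < d:
  (b_i(x), c_i(x), b_i(y), c_i(y)); for d = 1 only component 0 is used, for d = 2
  components 0 and 1, for d = 4 all four.\<close>
definition weyl_w :: "real \<Rightarrow> real \<Rightarrow> real \<Rightarrow> nat \<Rightarrow> nat \<Rightarrow> real" where
  "weyl_w N x y i j =
     (if j = 0 then weyl_b N i x else if j = 1 then weyl_c N i x
      else if j = 2 then weyl_b N i y else weyl_c N i y)"

definition weyl_phi ::
  "'a measure \<Rightarrow> ('a \<Rightarrow> real) \<Rightarrow> nat \<Rightarrow> real \<Rightarrow> real \<Rightarrow> real \<Rightarrow> nat \<Rightarrow> (nat \<Rightarrow> real) \<Rightarrow> complex" where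
  "weyl_phi M \<xi> d N x y i \<eta> =
     (\<integral>\<omega>. exp (\<i> * complex_of_real (\<xi> \<omega> * (\<Sum>j<d. weyl_w N x y i j * \<eta> j))) \<partial>M)"

end

theory Submission
  imports Defs "HOL-Real_Asymp.Real_Asymp"
begin

lemma b_Suc: "weyl_b N (Suc i) x = weyl_b N i x * x / sqrt (real (Suc i))"
proof -
  have "sqrt (fact (Suc i)) = sqrt (fact i) * sqrt (real (Suc i))"
    by (simp add: real_sqrt_mult mult.commute)
  thus ?thesis unfolding weyl_b_def by (simp add: field_simps)
qed

lemma c_eq: "weyl_c N i x = weyl_b N i x * ((real i - x^2) / x)"
  unfolding weyl_b_def weyl_c_def by (simp add: field_simps)

lemma b_nonneg: "0 \<le> N \<Longrightarrow> 0 < x \<Longrightarrow> 0 \<le> weyl_b N i x"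
  unfolding weyl_b_def by simp

lemma b_sq: "0 \<le> N \<Longrightarrow> (weyl_b N i x)^2 = N * exp (-(x^2)) * (x^2)^i / fact i"
proof -
  assume N: "0 \<le> N"
  have e: "(exp (- (x^2 / 2)))^2 = exp (-(x^2))"
    by (simp add: power2_eq_square exp_add[symmetric])
  show ?thesis unfolding weyl_b_def
    by (simp add: power_mult_distrib power_divide N e power_mult[symmetric] mult.commute[of 2])
qed

lemma pow_fact_le_exp: "0 \<le> z \<Longrightarrow> z ^ i / fact i \<le> exp (z::real)"
proof -
  assume z: "0 \<le> z"
  have s: "(\<lambda>n. z ^ n / fact n) sums exp z" using exp_converges[of z] by (simp add: divide_inverse mult.commute scaleR_conv_of_real)
  have "(\<Sum>n\<in>{i}. z ^ n / fact n) \<le> exp z"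
    using sum_le_suminf[OF sums_summable[OF s], of "{i}"] z sums_unique[OF s] by auto
  thus ?thesis by simp
qed

lemma bsq_le: "0 \<le> N \<Longrightarrow> (weyl_b N i x)^2 \<le> N"
proof -
  assume N: "0 \<le> N"
  have "exp (-(x^2)) * ((x^2)^i / fact i) \<le> exp (-(x^2)) * exp (x^2)"
    by (rule mult_left_mono[OF pow_fact_le_exp]) auto
  hence "exp (-(x^2)) * ((x^2)^i / fact i) \<le> 1" by (simp add: exp_minus)
  hence "N * (exp (-(x^2)) * ((x^2)^i / fact i)) \<le> N" using N by (metis mult_left_le)
  moreover have "(weyl_b N i x)^2 = N * (exp (-(x^2)) * ((x^2)^i / fact i))"
    using b_sq[OF N, of i x] by simp
  ultimately show ?thesis by simp
qed

lemma bsq_Suc: "0 \<le> N \<Longrightarrow> (weyl_b N (Suc i) x)^2 = (weyl_b N i x)^2 * (x^2 / real (Suc i))"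
  by (simp add: b_Suc power_mult_distrib power_divide)

lemma bsq_up_ge: "0 \<le> N \<Longrightarrow> (weyl_b N (i+m) x)^2 \<ge> (weyl_b N i x)^2 * (x^2 / real (i+m))^m"
proof (induction m)
  case 0 thus ?case by simp
next
  case (Suc m)
  have mono: "(x^2 / real (i+Suc m)) \<le> x^2 / real (i+m)" if "i + m > 0"
    using that by (intro divide_left_mono) auto
  have A: "(weyl_b N i x)^2 * (x^2 / real (i+Suc m))^(Suc m) \<le> (weyl_b N i x)^2 * (x^2 / real (i+m))^m * (x^2 / real (i+Suc m))"
  proof (cases "i + m = 0")
    case True thus ?thesis by (simp add: power_Suc2)
  next
    case False
    have "(x^2 / real (i+Suc m))^m \<le> (x^2 / real (i+m))^m"
      by (rule power_mono[OF mono]) (use False in auto)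
    hence "(weyl_b N i x)^2 * (x^2 / real (i+Suc m))^m * (x^2 / real (i+Suc m)) \<le> (weyl_b N i x)^2 * (x^2 / real (i+m))^m * (x^2 / real (i+Suc m))"
      by (intro mult_right_mono mult_left_mono) auto
    thus ?thesis by (simp only: power_Suc2 mult.assoc)
  qed
  also have "\<dots> \<le> (weyl_b N (i+m) x)^2 * (x^2 / real (i+Suc m))"
    by (rule mult_right_mono[OF Suc.IH[OF Suc.prems]]) simp
  also have "\<dots> = (weyl_b N (i + Suc m) x)^2"
    using bsq_Suc[OF Suc.prems, of "i+m" x] by simp
  finally show ?case .
qed

lemma bsq_up_le: "0 \<le> N \<Longrightarrow> (weyl_b N (i+m) x)^2 \<le> (weyl_b N i x)^2 * (x^2 / real (Suc i))^m"
proof (induction m)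
  case 0 thus ?case by simp
next
  case (Suc m)
  have "(weyl_b N (i + Suc m) x)^2 = (weyl_b N (i+m) x)^2 * (x^2 / real (Suc (i+m)))"
    using bsq_Suc[OF Suc.prems, of "i+m" x] by simp
  also have "\<dots> \<le> (weyl_b N (i+m) x)^2 * (x^2 / real (Suc i))"
    by (intro mult_left_mono divide_left_mono) auto
  also have "\<dots> \<le> (weyl_b N i x)^2 * (x^2 / real (Suc i))^m * (x^2 / real (Suc i))"
    by (rule mult_right_mono[OF Suc.IH[OF Suc.prems]]) simp
  finally show ?case by (simp only: power_Suc2 mult.assoc)
qed

lemma bsq_down_le: "0 \<le> N \<Longrightarrow> 0 < x \<Longrightarrow> (weyl_b N i x)^2 \<le> (weyl_b N (i+m) x)^2 * (real (i+m) / x^2)^m"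
proof (induction m)
  case 0 thus ?case by simp
next
  case (Suc m)
  have e: "(weyl_b N (i+m) x)^2 = (weyl_b N (i + Suc m) x)^2 * (real (Suc (i+m)) / x^2)"
    using bsq_Suc[OF Suc.prems(1), of "i+m" x] Suc.prems(2) by (simp add: field_simps)
  have "(weyl_b N i x)^2 \<le> (weyl_b N (i+m) x)^2 * (real (i+m) / x^2)^m" by (rule Suc.IH[OF Suc.prems])
  also have "\<dots> = (weyl_b N (i + Suc m) x)^2 * (real (Suc (i+m)) / x^2) * (real (i+m) / x^2)^m"
    by (simp add: e)
  also have "\<dots> \<le> (weyl_b N (i + Suc m) x)^2 * (real (Suc (i+m)) / x^2) * (real (i+Suc m) / x^2)^m"
    by (intro mult_left_mono power_mono divide_right_mono) auto
  finally show ?case by (simp add: power_Suc mult.assoc mult.commute mult.left_commute)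
qed


lemma pow_le_exp_aux:
  fixes q w h :: real
  assumes "0 \<le> q" "q \<le> 1 - w" "0 \<le> w" "real m \<ge> h - 1"
  shows "q ^ m \<le> exp (-(h-1) * w)"
proof -
  have "q \<le> exp (-w)" using assms(2) exp_ge_add_one_self[of "-w"] by linarith
  hence "q ^ m \<le> (exp (-w)) ^ m" by (rule power_mono) (use assms in auto)
  also have "\<dots> = exp (- (real m * w))" by (simp add: exp_of_nat_mult[symmetric])
  also have "\<dots> \<le> exp (-(h-1) * w)"
  proof -
    have "(h-1)*w \<le> real m * w" using assms(3,4) by (rule mult_right_mono[rotated])
    thus ?thesis by (simp add: algebra_simps)
  qed
  finally show ?thesis .
qed

lemma bsq_tail:
  assumes N: "0 \<le> N" and z: "0 < z" and h: "1 \<le> h"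
    and far: "real i \<ge> z^2 + 2*h \<or> real i + 2*h \<le> z^2"
  shows "(weyl_b N i z)^2 \<le> N * exp (-(h-1) * (h / (z^2+h)))"
proof -
  define m where "m = nat \<lfloor>h\<rfloor>"
  have m1: "real m \<le> h" "real m \<ge> h - 1" unfolding m_def using h by linarith+
  have z2: "0 < z^2" using z by simp
  have w0: "0 \<le> h / (z^2+h)" using z2 h by simp
  from far show ?thesis
  proof
    assume R: "real i \<ge> z^2 + 2*h"
    define i0 where "i0 = i - m"
    have mi: "m \<le> i" using R m1 z2 by linarith
    have i0: "real i0 = real i - real m" unfolding i0_def using mi by simp
    have "(weyl_b N i z)^2 = (weyl_b N (i0+m) z)^2" unfolding i0_def using mi by simp
    also have "\<dots> \<le> (weyl_b N i0 z)^2 * (z^2 / real (Suc i0))^m" by (rule bsq_up_le[OF N])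
    also have "\<dots> \<le> N * (z^2 / real (Suc i0))^m"
      by (rule mult_right_mono[OF bsq_le[OF N]]) simp
    also have "\<dots> \<le> N * exp (-(h-1) * (h / (z^2+h)))"
    proof (rule mult_left_mono[OF pow_le_exp_aux[OF _ _ w0 m1(2)]])
      have "real (Suc i0) \<ge> z^2 + h" using i0 R m1 by simp
      moreover have "0 < z^2 + h" using z2 h by linarith
      ultimately have "z^2 / real (Suc i0) \<le> z^2 / (z^2 + h)" using z2
        by (intro divide_left_mono) (auto intro!: mult_pos_pos)
      also have "\<dots> = 1 - h / (z^2+h)"
      proof -
        have "z^2 + h \<noteq> 0" using z2 h by linarith
        thus ?thesis by (simp add: field_simps)
      qed
      finally show "z^2 / real (Suc i0) \<le> 1 - h / (z^2+h)" .
    qed (use N z2 in auto)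
    finally show ?thesis .
  next
    assume L: "real i + 2*h \<le> z^2"
    have "(weyl_b N i z)^2 \<le> (weyl_b N (i+m) z)^2 * (real (i+m) / z^2)^m" by (rule bsq_down_le[OF N z])
    also have "\<dots> \<le> N * (real (i+m) / z^2)^m"
      by (rule mult_right_mono[OF bsq_le[OF N]]) simp
    also have "\<dots> \<le> N * exp (-(h-1) * (h / (z^2+h)))"
    proof (rule mult_left_mono[OF pow_le_exp_aux[OF _ _ w0 m1(2)]])
      have "real (i+m) \<le> z^2 - h" using L m1 by simp
      hence "real (i+m) / z^2 \<le> (z^2 - h) / z^2" using z2 by (intro divide_right_mono) auto
      also have "\<dots> = 1 - h / z^2" using z2 by (simp add: field_simps)
      also have "\<dots> \<le> 1 - h / (z^2+h)" using z2 h by (simp add: frac_le)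
      finally show "real (i+m) / z^2 \<le> 1 - h / (z^2+h)" .
    qed (use N z2 in auto)
    finally show ?thesis .
  qed
qed

lemma ln_lower_pade: assumes "0 \<le> (z::real)" shows "2*z/(2+z) \<le> ln (1+z)"
proof -
  let ?g = "\<lambda>z::real. ln (1+z) - 2*z/(2+z)"
  have "?g 0 \<le> ?g z"
  proof (rule deriv_nonneg_imp_mono[of 0 z ?g "\<lambda>z. 1/(1+z) - 4/(2+z)^2"])
    fix t assume t: "t \<in> {0..z}"
    hence t0: "0 \<le> t" by simp
    show "(?g has_real_derivative 1/(1+t) - 4/(2+t)^2) (at t)"
      using t0 by (auto intro!: derivative_eq_intros simp: field_simps power2_eq_square)
    have "4/(2+t)^2 \<le> 1/(1+t)" using t0
      apply (simp add: divide_simps)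
      apply (simp add: power2_eq_square algebra_simps)
      done
    thus "0 \<le> 1/(1+t) - 4/(2+t)^2" by simp
  qed (use assms in auto)
  thus ?thesis by simp
qed

lemma e_le_pow: assumes "k \<ge> 1" shows "exp 1 \<le> (1 + 1/real k)^k * sqrt (1 + 1/real k)"
proof -
  have k: "real k \<ge> 1" using assms by simp
  have "1 = (real k + 1/2) * (2*(1/real k)/(2+1/real k))" using k by (simp add: field_simps)
  also have "\<dots> \<le> (real k + 1/2) * ln (1 + 1/real k)"
    by (rule mult_left_mono[OF ln_lower_pade]) (use k in auto)
  finally have "exp 1 \<le> exp ((real k + 1/2) * ln (1 + 1/real k))" by simp
  also have "\<dots> = (1 + 1/real k) powr (real k + 1/2)"
  proof -
    have "0 < 1 + 1/real k" using k by (simp add: add_pos_pos)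
    thus ?thesis by (simp add: powr_def)
  qed
  also have "\<dots> = (1 + 1/real k)^k * sqrt (1 + 1/real k)"
  proof -
    have p: "0 < 1 + 1/real k" using k by (simp add: add_pos_pos)
    show ?thesis by (simp add: powr_add powr_realpow[OF p] powr_half_sqrt)
  qed
  finally show ?thesis .
qed

lemma fact_stirling_upper: assumes "k \<ge> 1" shows "fact k \<le> exp 1 * sqrt (real k) * (real k / exp 1)^k"
  using assms
proof (induction k rule: dec_induct)
  case base thus ?case by simp
next
  case (step k)
  have k: "real k \<ge> 1" using step by simp
  have "fact (Suc k) = real (Suc k) * fact k" by simp
  also have "\<dots> \<le> real (Suc k) * (exp 1 * sqrt (real k) * (real k / exp 1)^k)"
    using step.IH by (intro mult_left_mono) auto
  also have "\<dots> \<le> exp 1 * sqrt (real (Suc k)) * (real (Suc k) / exp 1)^(Suc k)"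
  proof -
    have E: "exp 1 \<le> (1 + 1/real k)^k * sqrt (1 + 1/real k)" using e_le_pow[OF step.hyps(1)] .
    have q1: "1 + 1/real k = real (Suc k) / real k" using k by (simp add: field_simps)
    have "sqrt (real k) * real k ^ k * exp 1 \<le> sqrt (real k) * real k ^ k * ((1 + 1/real k)^k * sqrt (1 + 1/real k))"
      using E by (intro mult_left_mono) auto
    also have "\<dots> = sqrt (real (Suc k)) * real (Suc k) ^ k"
      using k unfolding q1 by (simp add: power_divide real_sqrt_divide field_simps)
    finally have A: "sqrt (real k) * real k ^ k * exp 1 \<le> sqrt (real (Suc k)) * real (Suc k) ^ k" .
    have "real (Suc k) * (exp 1 * sqrt (real k) * (real k / exp 1)^k)
        = real (Suc k) / exp 1 ^ k * (sqrt (real k) * real k ^ k * exp 1)"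
      by (simp add: power_divide field_simps)
    also have "\<dots> \<le> real (Suc k) / exp 1 ^ k * (sqrt (real (Suc k)) * real (Suc k) ^ k)"
      using A by (intro mult_left_mono) auto
    also have "\<dots> = exp 1 * sqrt (real (Suc k)) * (real (Suc k) / exp 1)^(Suc k)"
      by (simp add: power_divide field_simps)
    finally show ?thesis .
  qed
  finally show ?case .
qed

lemma bsq_mode:
  assumes N: "0 \<le> N" and x: "1 \<le> x"
  shows "(weyl_b N (nat \<lceil>x^2\<rceil>) x)^2 \<ge> N / (exp 2 * sqrt (real (nat \<lceil>x^2\<rceil>)))"
proof -
  define a where "a = nat \<lceil>x^2\<rceil>"
  define l where "l = x^2"
  have l1: "1 \<le> l" unfolding l_def using x by (simp add: one_le_power)
  have l0: "0 \<le> l" unfolding l_def by simp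
  have al: "l \<le> real a" "real a < l + 1" unfolding a_def l_def using ceiling_correct[of "x^2"] l0 l_def by auto
  have a1: "a \<ge> 1" using al l1 by linarith
  have apos: "0 < real a" using a1 by simp
  have key: "-1 \<le> (real a - l) + real a * ln (l / real a)"
  proof -
    have "ln (real a / l) \<le> real a / l - 1" by (rule ln_le_minus_one) (use apos l1 in simp)
    hence "ln (l / real a) \<ge> -(real a / l - 1)" using apos l1 by (simp add: ln_div)
    hence "real a * ln (l / real a) \<ge> real a * (-(real a / l - 1))" using apos by (intro mult_left_mono) auto
    moreover have "(real a - l) + real a * (-(real a / l - 1)) = -((real a - l)^2 / l)"
      using l1 by (simp add: field_simps power2_eq_square)
    moreover have "(real a - l)^2 / l \<le> 1"
    proof -
      have "(real a - l)^2 \<le> 1" using al by (simp add: abs_le_square_iff[symmetric] power2_eq_square) (smt (verit) mult_le_one)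
      also have "1 \<le> l" by (rule l1)
      finally show ?thesis using l1 by simp
    qed
    ultimately show ?thesis by linarith
  qed
  have F: "fact a \<le> exp 1 * sqrt (real a) * (real a / exp 1)^a" by (rule fact_stirling_upper[OF a1])
  have "N / (exp 2 * sqrt (real a)) = N / (exp 1 * sqrt (real a)) * exp (-1)"
  proof -
    have "exp 2 = exp 1 * exp (1::real)" by (simp add: mult_exp_exp)
    thus ?thesis by (simp add: exp_minus field_simps)
  qed
  also have "\<dots> \<le> N / (exp 1 * sqrt (real a)) * (exp (real a - l) * (l / real a)^a)"
  proof (rule mult_left_mono)
    have "(l / real a)^a = exp (real a * ln (l / real a))"
    proof -
      have "0 < l / real a" using apos l1 by simp
      thus ?thesis by (simp add: exp_of_nat_mult)
    qed
    hence "exp (real a - l) * (l / real a)^a = exp ((real a - l) + real a * ln (l / real a))"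
      by (simp add: exp_add)
    thus "exp (-1) \<le> exp (real a - l) * (l / real a)^a" using key by simp
  qed (use N apos in simp)
  also have "\<dots> = N * exp (-l) * l^a / (exp 1 * sqrt (real a) * (real a / exp 1)^a)"
    using apos by (simp add: power_divide exp_diff exp_minus exp_of_nat_mult[symmetric] field_simps)
  also have "\<dots> \<le> N * exp (-l) * l^a / fact a"
    by (rule divide_left_mono[OF F]) (use N apos l1 in auto)
  also have "\<dots> = (weyl_b N a x)^2" unfolding l_def using b_sq[OF N] by simp
  finally show ?thesis unfolding a_def .
qed


lemma sq_diff_le2: "((a::real) - b)^2 \<le> 2*a^2 + 2*b^2"
proof -
  have "0 \<le> (a+b)^2" by simp
  thus ?thesis unfolding power2_eq_square by (simp add: algebra_simps)
qed

lemma sq_aff_le5: "(2*(a::real) - b)^2 \<le> 5*(a^2 + b^2)"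
proof -
  have "0 \<le> (a+2*b)^2" by simp
  thus ?thesis unfolding power2_eq_square by (simp add: algebra_simps)
qed

lemma slow_lemma:
  fixes \<beta> L t :: "nat \<Rightarrow> real" and j T :: nat and \<delta> \<epsilon> p q :: real
  assumes b0: "\<And>i. 0 \<le> \<beta> i"
    and ratio: "\<And>k. k < 2*T \<Longrightarrow> (1-\<delta>) * \<beta> (j+k) \<le> \<beta> (j+k+1)"
    and d0: "0 \<le> \<delta>" and d1: "\<delta> \<le> 1" and dT: "8 * real T * \<delta> \<le> 1"
    and L: "\<And>i. L i = p + q * real i"
    and err: "\<And>i. j \<le> i \<Longrightarrow> i \<le> j + 2*T \<Longrightarrow> \<bar>t i - \<beta> i * L i\<bar> \<le> \<epsilon>" and tj: "\<epsilon> \<le> \<bar>t j\<bar>"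
  shows "real T * ((\<bar>t j\<bar> - \<epsilon>)^2/40 - 2*\<epsilon>^2) \<le> (\<Sum>i\<in>{j+1..j+2*T}. (t i)^2)"
proof -
  define s where "s i = \<beta> i * L i" for i
  have pw: "(1-\<delta>)^k * \<beta> j \<le> \<beta> (j+k)" if "k \<le> 2*T" for k
    using that
  proof (induction k)
    case 0 thus ?case by simp
  next
    case (Suc k)
    have "(1-\<delta>)^(Suc k) * \<beta> j = (1-\<delta>) * ((1-\<delta>)^k * \<beta> j)" by simp
    also have "\<dots> \<le> (1-\<delta>) * \<beta> (j+k)" using Suc d1 by (intro mult_left_mono) auto
    also have "\<dots> \<le> \<beta> (j + Suc k)" using ratio[of k] Suc.prems by simp
    finally show ?case .
  qed
  have half: "(\<beta> j)^2 / 2 \<le> (\<beta> (j+k))^2" if "k \<le> 2*T" for k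
  proof -
    have "1 + real (2*k) * (-\<delta>) \<le> (1 + (-\<delta>))^(2*k)" by (rule Bernoulli_inequality) (use d1 in simp)
    moreover have "real (2*k) * \<delta> \<le> 1/2"
    proof -
      have "real (2*k) * \<delta> \<le> real (4*T) * \<delta>" using that d0 by (intro mult_right_mono) auto
      moreover have "real (4*T) * \<delta> \<le> 1/2" using dT by simp
      ultimately show ?thesis by linarith
    qed
    ultimately have B: "1/2 \<le> ((1-\<delta>)^k)^2" by (simp add: power_mult[symmetric] mult.commute)
    have "(1/2) * (\<beta> j)^2 \<le> ((1-\<delta>)^k)^2 * (\<beta> j)^2" using B by (rule mult_right_mono) simp
    hence "(\<beta> j)^2 / 2 \<le> ((1-\<delta>)^k)^2 * (\<beta> j)^2" by simp
    also have "\<dots> = ((1-\<delta>)^k * \<beta> j)^2" by (simp add: power_mult_distrib)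
    also have "\<dots> \<le> (\<beta> (j+k))^2"
      by (rule power_mono[OF pw[OF that]]) (use b0 d1 in simp)
    finally show ?thesis .
  qed
  have pair: "(s j)^2 / 10 \<le> (s (j+k))^2 + (s (j+2*k))^2" if "k \<le> T" for k
  proof -
    have aff: "L j = 2 * L (j+k) - L (j+2*k)" unfolding L by (simp add: algebra_simps)
    have cs: "(L j)^2 \<le> 5 * ((L (j+k))^2 + (L (j+2*k))^2)"
      unfolding aff using sum_squares_ge_zero
      by (smt (verit, best) power2_eq_square power2_diff zero_le_power2 left_diff_distrib)
    have h1: "(\<beta> j)^2/2 \<le> (\<beta> (j+k))^2" using half that by simp
    have h2: "(\<beta> j)^2/2 \<le> (\<beta> (j+2*k))^2" using half[of "2*k"] that by simp
    have "(s j)^2 / 10 = ((\<beta> j)^2 / 2) * ((L j)^2 / 5)" unfolding s_def by (simp add: power_mult_distrib)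
    also have "\<dots> \<le> ((\<beta> j)^2 / 2) * ((L (j+k))^2 + (L (j+2*k))^2)"
      using cs by (intro mult_left_mono) auto
    also have "\<dots> = ((\<beta> j)^2 / 2) * (L (j+k))^2 + ((\<beta> j)^2 / 2) * (L (j+2*k))^2" by (simp add: algebra_simps)
    also have "\<dots> \<le> (\<beta> (j+k))^2 * (L (j+k))^2 + (\<beta> (j+2*k))^2 * (L (j+2*k))^2"
      using h1 h2 by (intro add_mono mult_right_mono) auto
    also have "\<dots> = (s (j+k))^2 + (s (j+2*k))^2" unfolding s_def by (simp add: power_mult_distrib)
    finally show ?thesis .
  qed
  define S where "S = (\<Sum>i\<in>{j+1..j+2*T}. (s i)^2)"
  have sum1: "(\<Sum>k\<in>{1..T}. (s (j+k))^2) \<le> S"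
  proof -
    have "(\<Sum>k\<in>{1..T}. (s (j+k))^2) = (\<Sum>i\<in>(\<lambda>k. j+k) ` {1..T}. (s i)^2)"
      by (subst sum.reindex) (auto simp: inj_on_def)
    also have "\<dots> \<le> S" unfolding S_def by (rule sum_mono2) auto
    finally show ?thesis .
  qed
  have sum2: "(\<Sum>k\<in>{1..T}. (s (j+2*k))^2) \<le> S"
  proof -
    have "(\<Sum>k\<in>{1..T}. (s (j+2*k))^2) = (\<Sum>i\<in>(\<lambda>k. j+2*k) ` {1..T}. (s i)^2)"
      by (subst sum.reindex) (auto simp: inj_on_def)
    also have "\<dots> \<le> S" unfolding S_def by (rule sum_mono2) auto
    finally show ?thesis .
  qed
  have "real T * ((s j)^2 / 10) = (\<Sum>k\<in>{1..T}. (s j)^2 / 10)" by simp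
  also have "\<dots> \<le> (\<Sum>k\<in>{1..T}. (s (j+k))^2 + (s (j+2*k))^2)" by (rule sum_mono) (use pair in auto)
  also have "\<dots> \<le> 2 * S" using sum1 sum2 by (simp add: sum.distrib)
  finally have A: "real T * (s j)^2 / 20 \<le> S" by simp
  have tt: "(s i)^2 / 2 - \<epsilon>^2 \<le> (t i)^2" if "i \<in> {j+1..j+2*T}" for i
  proof -
    have e: "\<bar>t i - s i\<bar> \<le> \<epsilon>" using err[of i] that unfolding s_def by simp
    have "\<bar>t i - s i\<bar>^2 \<le> \<epsilon>^2" by (rule power_mono[OF e]) simp
    hence "(t i - s i)^2 \<le> \<epsilon>^2" by simp
    moreover have "(s i)^2 \<le> 2*(t i)^2 + 2*(t i - s i)^2"
      using sq_diff_le2[of "t i" "t i - s i"] by simp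
    ultimately show ?thesis by linarith
  qed
  have "S / 2 - real T * (2 * \<epsilon>^2) = (\<Sum>i\<in>{j+1..j+2*T}. (s i)^2 / 2 - \<epsilon>^2)"
    unfolding S_def by (simp add: sum_subtractf sum_divide_distrib)
  also have "\<dots> \<le> (\<Sum>i\<in>{j+1..j+2*T}. (t i)^2)" by (rule sum_mono) (rule tt, assumption)
  finally have B: "S / 2 - real T * (2 * \<epsilon>^2) \<le> (\<Sum>i\<in>{j+1..j+2*T}. (t i)^2)" .
  have sj: "(\<bar>t j\<bar> - \<epsilon>)^2 \<le> (s j)^2"
  proof -
    have "\<bar>t j - s j\<bar> \<le> \<epsilon>" using err[of j] unfolding s_def by simp
    hence "\<bar>t j\<bar> - \<epsilon> \<le> \<bar>s j\<bar>" by linarith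
    hence "(\<bar>t j\<bar> - \<epsilon>)^2 \<le> \<bar>s j\<bar>^2" by (rule power_mono) (use tj in simp)
    thus ?thesis by simp
  qed
  have "real T * ((\<bar>t j\<bar> - \<epsilon>)^2/40 - 2*\<epsilon>^2) \<le> real T * ((s j)^2/40 - 2*\<epsilon>^2)"
    using sj by (intro mult_left_mono) auto
  also have "\<dots> = (real T * (s j)^2 / 20) / 2 - real T * (2 * \<epsilon>^2)" by (simp add: algebra_simps)
  also have "\<dots> \<le> S / 2 - real T * (2 * \<epsilon>^2)" using A by simp
  also have "\<dots> \<le> (\<Sum>i\<in>{j+1..j+2*T}. (t i)^2)" by (rule B)
  finally show ?thesis .
qed


lemma one_minus_cos_ge: assumes "\<bar>t\<bar> \<le> 1" shows "t^2/5 \<le> 1 - cos (t::real)"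
proof -
  define v where "v = t/2"
  have v: "\<bar>v\<bar> \<le> 1/2" using assms unfolding v_def by simp
  have M0: "\<bar>sin v - (\<Sum>m<3. sin_coeff m * v ^ m)\<bar> \<le> inverse (fact 3) * \<bar>v\<bar> ^ 3"
    by (rule Maclaurin_sin_bound)
  have sc: "(\<Sum>m<3. sin_coeff m * v ^ m) = v"
    by (simp add: numeral_3_eq_3 sin_coeff_def)
  have f3: "inverse (fact 3) = (1/6::real)" by (simp add: numeral_3_eq_3)
  have M: "\<bar>sin v - v\<bar> \<le> (1/6) * \<bar>v\<bar>^3"
    using M0 unfolding sc f3 .
  have c: "\<bar>v\<bar>^3 \<le> \<bar>v\<bar> * (1/4)"
  proof -
    have "\<bar>v\<bar>^2 \<le> (1/2)^2" by (rule power_mono[OF v]) simp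
    hence "\<bar>v\<bar> * \<bar>v\<bar>^2 \<le> \<bar>v\<bar> * (1/4)" by (intro mult_left_mono) (auto simp: power2_eq_square)
    moreover have "\<bar>v\<bar>^3 = \<bar>v\<bar> * \<bar>v\<bar>^2" by (simp add: power3_eq_cube power2_eq_square)
    ultimately show ?thesis by simp
  qed
  have "\<bar>v\<bar> * (23/24) \<le> \<bar>sin v\<bar>" using M c by linarith
  hence "(\<bar>v\<bar> * (23/24))^2 \<le> \<bar>sin v\<bar>^2" by (rule power_mono) simp
  moreover have "(\<bar>v\<bar> * (23/24))^2 = v^2 * (529/576)" by (simp add: power_mult_distrib power2_eq_square)
  ultimately have S: "v^2 * (529/576) \<le> (sin v)^2" by simp
  have "cos t = 1 - 2 * (sin v)^2" unfolding v_def using cos_double_sin[of "t/2"] by simp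
  moreover have "t^2 = 4 * v^2" unfolding v_def by (simp add: power_divide)
  moreover have "2 * v^2 \<le> 5 * (sin v)^2" using S zero_le_power2[of v] by linarith
  ultimately show ?thesis by simp
qed

lemma sqrt_le_abs_sum: "sqrt (a^2 + b^2) \<le> \<bar>a\<bar> + \<bar>b::real\<bar>"
proof (rule real_le_lsqrt)
  have "0 \<le> 2 * \<bar>a\<bar> * \<bar>b\<bar>" by simp
  thus "a^2 + b^2 \<le> (\<bar>a\<bar> + \<bar>b\<bar>)^2" unfolding power2_sum by simp
qed auto


lemma abs_le_sqrt_sum4:
  fixes u0 u1 u2 u3 :: real
  shows "\<bar>u0\<bar> \<le> sqrt (u0^2+u1^2+u2^2+u3^2)" "\<bar>u1\<bar> \<le> sqrt (u0^2+u1^2+u2^2+u3^2)"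
        "\<bar>u2\<bar> \<le> sqrt (u0^2+u1^2+u2^2+u3^2)" "\<bar>u3\<bar> \<le> sqrt (u0^2+u1^2+u2^2+u3^2)"
  by (rule real_le_rsqrt; simp)+

lemma sum4_nonneg: "0 \<le> (u0::real)^2+u1^2+u2^2+u3^2"
  by (intro add_nonneg_nonneg zero_le_power2)

lemma comb_bound:
  fixes N z i u v Ub B :: real
  assumes z: "0 < z" and u: "\<bar>u\<bar> \<le> Ub" and v: "\<bar>v\<bar> \<le> Ub" and B: "\<bar>b\<bar> \<le> B"
  shows "\<bar>b * (u + v * ((i - z^2)/z))\<bar> \<le> B * (Ub * (1 + \<bar>i - z^2\<bar>/z))"
proof -
  have Ub0: "0 \<le> Ub" using u by linarith
  have "\<bar>u + v * ((i - z^2)/z)\<bar> \<le> \<bar>u\<bar> + \<bar>v * ((i - z^2)/z)\<bar>" by (rule abs_triangle_ineq)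
  also have "\<bar>v * ((i - z^2)/z)\<bar> = \<bar>v\<bar> * (\<bar>i - z^2\<bar>/z)" using z by (simp add: abs_mult)
  finally have "\<bar>u + v * ((i - z^2)/z)\<bar> \<le> \<bar>u\<bar> + \<bar>v\<bar> * (\<bar>i - z^2\<bar>/z)" .
  also have "\<dots> \<le> Ub + Ub * (\<bar>i - z^2\<bar>/z)"
    using u v z by (intro add_mono mult_right_mono) auto
  finally have "\<bar>u + v * ((i - z^2)/z)\<bar> \<le> Ub * (1 + \<bar>i - z^2\<bar>/z)" by (simp add: algebra_simps)
  hence "\<bar>b\<bar> * \<bar>u + v * ((i - z^2)/z)\<bar> \<le> B * (Ub * (1 + \<bar>i - z^2\<bar>/z))"
    using B by (intro mult_mono) auto
  thus ?thesis by (simp add: abs_mult)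
qed

lemma err_y:
  fixes N x y u0 u1 u2 u3 c1 c2 R \<tau> Ub \<epsilon>g :: real and i :: nat
  assumes N1: "1 \<le> N" and c1: "0 < c1"
    and X: "c1*N \<le> x" "x \<le> c2*N"
    and Ub: "sqrt (u0^2+u1^2+u2^2+u3^2) \<le> Ub"
    and Y: "(u2 = 0 \<and> u3 = 0) \<or> (c1*N \<le> y \<and> y \<le> c2*N \<and> N powr \<epsilon>g \<le> \<bar>x - y\<bar>)"
    and R0: "0 \<le> R" and Ey1: "R + 2 \<le> c1*N*N powr \<epsilon>g" and Ey2: "1 \<le> c1*N*N powr \<epsilon>g/2"
    and Ey: "sqrt (N * exp (-(c1*N*N powr \<epsilon>g/2 - 1)*((c1*N*N powr \<epsilon>g/2)/((c2*N)^2 + c1*N*N powr \<epsilon>g/2)))) * Ub * (1 + (2*(c2*N)^2+R+2)/(c1*N)) \<le> E"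
    and i: "x^2 \<le> real i" "real i \<le> x^2 + R + 1"
  shows "\<bar>weyl_b N i y * u2 + weyl_c N i y * u3\<bar> \<le> E"
  using Y
proof
  assume "u2 = 0 \<and> u3 = 0"
  moreover have "0 \<le> E"
  proof -
    have N0: "0 \<le> N" using N1 by simp
    have U0: "0 \<le> Ub" using Ub real_sqrt_ge_zero[OF sum4_nonneg[of u0 u1 u2 u3]] by linarith
    have "0 \<le> 2*(c2*N)^2+R+2" using R0 zero_le_power2[of "c2*N"] by linarith
    moreover have "0 < c1*N" using c1 N1 by simp
    ultimately have "0 \<le> (2*(c2*N)^2+R+2)/(c1*N)" by simp
    hence p1: "0 \<le> 1 + (2*(c2*N)^2+R+2)/(c1*N)" by linarith
    have p2: "0 \<le> sqrt (N * exp (-(c1*N*N powr \<epsilon>g/2 - 1)*((c1*N*N powr \<epsilon>g/2)/((c2*N)^2 + c1*N*N powr \<epsilon>g/2))))"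
      by (rule real_sqrt_ge_zero[OF mult_nonneg_nonneg[OF N0 less_imp_le[OF exp_gt_zero]]])
    have "0 \<le> sqrt (N * exp (-(c1*N*N powr \<epsilon>g/2 - 1)*((c1*N*N powr \<epsilon>g/2)/((c2*N)^2 + c1*N*N powr \<epsilon>g/2)))) * Ub * (1 + (2*(c2*N)^2+R+2)/(c1*N))"
      by (rule mult_nonneg_nonneg[OF mult_nonneg_nonneg[OF p2 U0] p1])
    thus ?thesis using Ey by linarith
  qed
  ultimately show ?thesis by simp
next
  assume yy: "c1*N \<le> y \<and> y \<le> c2*N \<and> N powr \<epsilon>g \<le> \<bar>x - y\<bar>"
  define h where "h = c1*N*N powr \<epsilon>g/2"
  have N0: "0 \<le> N" using N1 by simp
  have cN: "0 < c1*N" using c1 N1 by simp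
  have y0: "0 < y" using yy cN by linarith
  have x0: "0 < x" using X cN by linarith
  have h1: "1 \<le> h" using Ey2 unfolding h_def .
  have far: "real i \<ge> y^2 + 2*h \<or> real i + 2*h \<le> y^2"
  proof -
    have "y^2 - x^2 = (y - x) * (y + x)" by (simp add: power2_eq_square algebra_simps)
    hence "\<bar>y^2 - x^2\<bar> = \<bar>y - x\<bar> * (y + x)" using x0 y0 by (simp add: abs_mult)
    also have "\<dots> \<ge> N powr \<epsilon>g * (2*(c1*N))"
    proof (rule mult_mono)
      show "N powr \<epsilon>g \<le> \<bar>y - x\<bar>" using yy by (simp add: abs_minus_commute)
      show "2*(c1*N) \<le> y + x" using yy X by linarith
    qed (use x0 y0 cN in auto)
    finally have d: "\<bar>y^2 - x^2\<bar> \<ge> 4*h" unfolding h_def by (simp add: algebra_simps)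
    have R1: "R + 1 \<le> 2*h" using Ey1 unfolding h_def by simp
    show ?thesis
    proof (cases "y^2 \<ge> x^2")
      case True
      hence "y^2 - x^2 \<ge> 4*h" using d by simp
      hence "real i + 2*h \<le> y^2" using i R1 by linarith
      thus ?thesis by simp
    next
      case False
      hence "x^2 - y^2 \<ge> 4*h" using d by simp
      hence "real i \<ge> y^2 + 2*h" using i R1 h1 by linarith
      thus ?thesis by simp
    qed
  qed
  have B: "(weyl_b N i y)^2 \<le> N * exp (-(h-1) * (h / (y^2+h)))" by (rule bsq_tail[OF N0 y0 h1 far])
  also have "\<dots> \<le> N * exp (-(h-1) * (h / ((c2*N)^2+h)))"
  proof -
    have "y^2 \<le> (c2*N)^2" using yy y0 by (intro power_mono) auto
    moreover have "0 < y^2 + h" "0 < (c2*N)^2 + h" using h1 zero_le_power2[of y] zero_le_power2[of "c2*N"] by linarith+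
    ultimately have "h / ((c2*N)^2+h) \<le> h / (y^2+h)" using h1 by (intro divide_left_mono) auto
    hence "(h-1) * (h / ((c2*N)^2+h)) \<le> (h-1) * (h / (y^2+h))" using h1 by (intro mult_left_mono) auto
    hence "-(h-1) * (h / (y^2+h)) \<le> -(h-1) * (h / ((c2*N)^2+h))" by (simp only: minus_mult_left neg_le_iff_le)
    hence "exp (-(h-1) * (h / (y^2+h))) \<le> exp (-(h-1) * (h / ((c2*N)^2+h)))" by (simp only: exp_le_cancel_iff)
    thus ?thesis using N0 by (rule mult_left_mono)
  qed
  finally have B1: "(weyl_b N i y)^2 \<le> N * exp (-(h-1) * (h / ((c2*N)^2+h)))" .
  have B2: "\<bar>weyl_b N i y\<bar> \<le> sqrt (N * exp (-(h-1) * (h / ((c2*N)^2+h))))"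
    using real_sqrt_le_mono[OF B1] by simp
  have u2b: "\<bar>u2\<bar> \<le> Ub" using abs_le_sqrt_sum4(3)[of u2 u0 u1 u3] Ub by linarith
  have u3b: "\<bar>u3\<bar> \<le> Ub" using abs_le_sqrt_sum4(4)[of u3 u0 u1 u2] Ub by linarith
  have "\<bar>weyl_b N i y * u2 + weyl_c N i y * u3\<bar> = \<bar>weyl_b N i y * (u2 + u3 * ((real i - y^2)/y))\<bar>"
    by (simp add: c_eq distrib_left mult_ac)
  also have "\<dots> \<le> sqrt (N * exp (-(h-1) * (h / ((c2*N)^2+h)))) * (Ub * (1 + \<bar>real i - y^2\<bar>/y))"
    by (rule comb_bound[OF y0 u2b u3b B2])
  also have "\<dots> \<le> sqrt (N * exp (-(h-1) * (h / ((c2*N)^2+h)))) * (Ub * (1 + (2*(c2*N)^2+R+2)/(c1*N)))"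
  proof -
    have "\<bar>real i - y^2\<bar> \<le> 2*(c2*N)^2+R+2"
    proof -
      have "x^2 \<le> (c2*N)^2" "y^2 \<le> (c2*N)^2" using X yy x0 y0 by (auto intro!: power_mono)
      thus ?thesis unfolding abs_le_iff using i R0 zero_le_power2[of y] zero_le_power2[of x] by (intro conjI; linarith)
    qed
    hence "\<bar>real i - y^2\<bar>/y \<le> (2*(c2*N)^2+R+2)/(c1*N)"
      using yy y0 cN by (intro frac_le) auto
    moreover have "0 \<le> Ub" using Ub real_sqrt_ge_zero[OF sum4_nonneg[of u0 u1 u2 u3]] by linarith
    ultimately show ?thesis using N0 by (intro mult_left_mono) auto
  qed
  also have "\<dots> \<le> E" using Ey unfolding h_def by (simp add: mult.assoc)
  finally show ?thesis .
qed


lemma exp_bound_mono: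
  fixes N h z2 Z2 :: real
  assumes "0 \<le> N" "1 \<le> h" "0 \<le> z2" "z2 \<le> Z2"
  shows "N * exp (-(h-1) * (h / (z2+h))) \<le> N * exp (-(h-1) * (h / (Z2+h)))"
proof -
  have p: "0 < z2 + h" "0 < Z2 + h" using assms by linarith+
  have "h / (Z2+h) \<le> h / (z2+h)" using assms p by (intro divide_left_mono) auto
  hence "(h-1) * (h / (Z2+h)) \<le> (h-1) * (h / (z2+h))" using assms by (intro mult_left_mono) auto
  hence "-(h-1) * (h / (z2+h)) \<le> -(h-1) * (h / (Z2+h))" by (simp only: minus_mult_left neg_le_iff_le)
  hence "exp (-(h-1) * (h / (z2+h))) \<le> exp (-(h-1) * (h / (Z2+h)))" by (simp only: exp_le_cancel_iff)
  thus ?thesis using assms(1) by (rule mult_left_mono)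
qed

lemma abs_le_sqrt_of_sq: "(b::real)^2 \<le> B \<Longrightarrow> \<bar>b\<bar> \<le> sqrt B"
  using real_sqrt_le_mono[of "b^2" B] by simp

lemma core_x:
  fixes N x y u0 u1 u2 u3 c1 c2 R \<tau> Ub \<epsilon>g :: real and n :: nat
  assumes N1: "1 \<le> N" and c1: "0 < c1" and c12: "c1 \<le> c2"
    and X: "c1*N \<le> x" "x \<le> c2*N" and X8: "8 \<le> c1*N"
    and nb: "(c2+1)*N \<le> sqrt (real n)"
    and tau: "0 < \<tau>" "\<tau> \<le> 1" and tauU: "4*\<tau>^2*(512*exp 2*(c2+1)) \<le> u0^2+u1^2"
    and Ub: "sqrt (u0^2+u1^2+u2^2+u3^2) \<le> Ub"
    and R1: "4 \<le> R" and R2: "16*R \<le> (c1*N)^2" and R3: "R + 2 \<le> N^2" and R4: "c2*N/4 + 2 \<le> R"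
    and R5: "1 + (c2*N)^2/(8*R) \<le> R/2"
    and Tl: "sqrt (N * exp (-(R/4-1)*((R/4)/((c2*N)^2+R/4)))) * Ub * (1 + (R+2)/(c1*N)) \<le> \<tau>/2"
    and Y: "(u2 = 0 \<and> u3 = 0) \<or> (c1*N \<le> y \<and> y \<le> c2*N \<and> N powr \<epsilon>g \<le> \<bar>x - y\<bar>)"
    and Ey1: "R + 2 \<le> c1*N*N powr \<epsilon>g" and Ey2: "1 \<le> c1*N*N powr \<epsilon>g/2"
    and Ey: "sqrt (N * exp (-(c1*N*N powr \<epsilon>g/2 - 1)*((c1*N*N powr \<epsilon>g/2)/((c2*N)^2 + c1*N*N powr \<epsilon>g/2)))) * Ub * (1 + (2*(c2*N)^2+R+2)/(c1*N)) \<le> \<tau>/20"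
  shows "((c1*N)^2/(16*R) - 1) * \<tau>^2/500 \<le> (\<Sum>i\<in>{1..n}. 1 - cos (weyl_b N i x * u0 + weyl_c N i x * u1 + weyl_b N i y * u2 + weyl_c N i y * u3))"
proof -
  define t where "t i = weyl_b N i x * u0 + weyl_c N i x * u1 + weyl_b N i y * u2 + weyl_c N i y * u3" for i
  define \<beta> where "\<beta> i = weyl_b N i x" for i
  define L where "L i = u0 + u1 * ((real i - x^2)/x)" for i
  define e where "e i = weyl_b N i y * u2 + weyl_c N i y * u3" for i
  have N0: "0 \<le> N" using N1 by simp
  have cN: "0 < c1*N" using c1 N1 by simp
  have x0: "0 < x" and x8: "8 \<le> x" using X X8 cN by linarith+
  have x1: "1 \<le> x" using x8 by simp
  have xx: "x^2 \<le> (c2*N)^2" using X x0 by (intro power_mono) auto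
  have xx1: "(c1*N)^2 \<le> x^2" using X cN by (intro power_mono) auto
  have R0: "0 \<le> R" using R1 by simp
  have t_eq: "t i = \<beta> i * L i + e i" for i
    unfolding t_def \<beta>_def L_def e_def by (simp add: c_eq distrib_left mult_ac)
  have b0: "0 \<le> \<beta> i" for i unfolding \<beta>_def by (rule b_nonneg[OF N0 x0])
  define a where "a = nat \<lceil>x^2\<rceil>"
  define Rn where "Rn = nat \<lfloor>R\<rfloor>"
  define T where "T = nat \<lfloor>x^2/(16*R)\<rfloor>"
  define \<delta> where "\<delta> = 2*R/x^2"
  define \<epsilon> where "\<epsilon> = \<tau>/20"
  have a_b: "x^2 \<le> real a" "real a \<le> x^2 + 1"
    unfolding a_def using ceiling_correct[of "x^2"] zero_le_power2[of x] by auto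
  have Rn_b: "R - 1 \<le> real Rn" "real Rn \<le> R" unfolding Rn_def using R0 by linarith+
  have T_b: "x^2/(16*R) - 1 \<le> real T" "real T \<le> x^2/(16*R)"
  proof -
    have "0 \<le> x^2/(16*R)" using R0 by simp
    thus "x^2/(16*R) - 1 \<le> real T" "real T \<le> x^2/(16*R)" unfolding T_def by linarith+
  qed
  have TR: "2 * real T \<le> R/2 - 1"
  proof -
    have "x^2/(16*R) \<le> (c2*N)^2/(16*R)" using xx R1 by (intro divide_right_mono) auto
    moreover have "(c2*N)^2/(16*R) = ((c2*N)^2/(8*R))/2" by simp
    ultimately show ?thesis using T_b R5 by linarith
  qed
  have n_big: "a + Rn \<le> n"
  proof -
    have "((c2+1)*N)^2 \<le> (sqrt (real n))^2" using nb c12 c1 N1 by (intro power_mono) auto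
    hence nn: "((c2+1)*N)^2 \<le> real n" by simp
    have "((c2+1)*N)^2 = (c2*N)^2 + 2*c2*N^2 + N^2" by (simp add: power2_eq_square algebra_simps)
    moreover have "0 \<le> 2*c2*N^2" using c1 c12 by simp
    ultimately have "(c2*N)^2 + R + 2 \<le> real n" using nn R3 by linarith
    hence "real a + real Rn \<le> real n" using a_b Rn_b xx by linarith
    thus ?thesis by linarith
  qed
  have a1: "1 \<le> a" using a_b x1 by (smt (verit) of_nat_le_iff of_nat_1 one_le_power)
  have win: "x^2 \<le> real i \<and> real i \<le> x^2 + R + 1" if "a \<le> i" "i \<le> a + Rn" for i
    using that a_b Rn_b by (smt (verit) of_nat_add of_nat_le_iff)
  have errb: "\<bar>e i\<bar> \<le> \<epsilon>" if "a \<le> i" "i \<le> a + Rn" for i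
    unfolding e_def \<epsilon>_def
    by (rule err_y[OF N1 c1 X Ub Y R0 Ey1 Ey2 Ey]) (use win[OF that] in auto)
  define m where "m = nat \<lceil>x/4\<rceil>"
  have m_b: "x/4 \<le> real m" "real m \<le> x/4 + 1"
    unfolding m_def using ceiling_correct[of "x/4"] x0 by auto
  have mRn: "m \<le> Rn"
  proof -
    have "x/4 \<le> c2*N/4" using X by simp
    hence "real m \<le> real Rn" using m_b Rn_b R4 by linarith
    thus ?thesis by simp
  qed
  have ba: "1/(exp 2*(c2+1)) \<le> (\<beta> a)^2"
  proof -
    have M: "N / (exp 2 * sqrt (real a)) \<le> (\<beta> a)^2" unfolding \<beta>_def a_def by (rule bsq_mode[OF N0 x1])
    have "(x+1)^2 = x^2 + 2*x + 1" by (simp add: power2_eq_square algebra_simps)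
    hence "real a \<le> (x+1)^2" using a_b x0 by linarith
    hence "sqrt (real a) \<le> sqrt ((x+1)^2)" by (rule real_sqrt_le_mono)
    also have "\<dots> = x + 1" using x0 by simp
    also have "\<dots> \<le> (c2+1)*N" using X N1 by (simp add: algebra_simps)
    finally have sa: "sqrt (real a) \<le> (c2+1)*N" .
    have sa0: "0 < sqrt (real a)" using a1 by simp
    have "1/(exp 2*(c2+1)) = N / (exp 2 * ((c2+1)*N))" using N1 by simp
    also have "\<dots> \<le> N / (exp 2 * sqrt (real a))"
    proof (rule divide_left_mono)
      show "exp 2 * sqrt (real a) \<le> exp 2 * ((c2+1)*N)" using sa by simp
      have "0 < (c2+1)*N" using c1 c12 N1 by simp
      thus "0 < exp 2 * ((c2+1)*N) * (exp 2 * sqrt (real a))" using sa0 by simp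
    qed (use N0 in simp)
    finally show ?thesis using M by linarith
  qed
  have bam: "(\<beta> a)^2 / 2 \<le> (\<beta> (a+m))^2"
  proof -
    define A where "A = real (a+m)"
    have A_b: "x^2 \<le> A" "A \<le> x^2 + x/4 + 2" unfolding A_def using a_b m_b by auto
    have Ap: "0 < A" using A_b x0 by (meson less_le_trans zero_less_power)
    define w where "w = (A - x^2)/A"
    have w0: "0 \<le> w" "w \<le> 1" unfolding w_def using A_b Ap by auto
    have xa: "x^2 / A = 1 - w" unfolding w_def using Ap by (simp add: field_simps)
    have "1 - real m * w \<le> (1 - w)^m" using Bernoulli_inequality[of "-w" m] w0 by simp
    moreover have "real m * w \<le> 1/2"
    proof -
      have x2p: "0 < x^2" using x0 by simp
      have "w \<le> (A - x^2)/x^2" unfolding w_def using A_b x2p Ap by (intro divide_left_mono) auto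
      also have "\<dots> \<le> (x/4 + 2)/x^2" using A_b x2p by (intro divide_right_mono) auto
      finally have "w \<le> (x/4 + 2)/x^2" .
      moreover have "0 \<le> x/4 + 1" using x0 by simp
      ultimately have "real m * w \<le> (x/4+1) * ((x/4 + 2)/x^2)" using m_b w0 by (intro mult_mono) auto
      also have "\<dots> \<le> 1/2"
      proof -
        have "8*x \<le> x*x" using x8 x0 by (intro mult_right_mono) auto
        moreover have "(x/4+1)*(x/4 + 2) = x*x/16 + 3*x/4 + 2" by (simp add: algebra_simps)
        moreover have "x^2/2 = x*x/2" by (simp add: power2_eq_square)
        ultimately have "(x/4+1)*(x/4 + 2) \<le> x^2/2" using x8 by linarith
        thus ?thesis using x0 by (simp add: field_simps)
      qed
      finally show ?thesis .
    qed
    ultimately have "1/2 \<le> (x^2/A)^m" unfolding xa by linarith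
    hence "(\<beta> a)^2 * (1/2) \<le> (\<beta> a)^2 * (x^2/A)^m" by (intro mult_left_mono) auto
    also have "\<dots> \<le> (\<beta> (a+m))^2" unfolding \<beta>_def A_def by (rule bsq_up_ge[OF N0])
    finally show ?thesis by simp
  qed
  define U where "U = sqrt (u0^2 + u1^2)"
  have U0: "0 \<le> U" unfolding U_def by simp
  have U2: "U^2 = u0^2 + u1^2" unfolding U_def by simp
  have Ule: "U \<le> \<bar>u0\<bar> + \<bar>u1\<bar>" unfolding U_def by (rule sqrt_le_abs_sum)
  obtain i0 where i0: "i0 = a \<or> i0 = a + m" and Li0: "U/16 \<le> \<bar>L i0\<bar>"
  proof -
    have d: "L (a+m) - L a = u1 * (real m / x)" unfolding L_def using x0 by (simp add: field_simps)
    have "\<bar>u1\<bar> * (1/4) \<le> \<bar>u1\<bar> * (real m / x)" using m_b x0 by (intro mult_left_mono) (auto simp: field_simps)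
    hence d2: "\<bar>u1\<bar>/4 \<le> \<bar>L (a+m) - L a\<bar>" unfolding d using x0 by (simp add: abs_mult)
    have La: "\<bar>u0\<bar> - \<bar>u1\<bar>/8 \<le> \<bar>L a\<bar>"
    proof -
      have "(real a - x^2)/x \<le> 1/8" using a_b x8 x0 by (simp add: field_simps)
      moreover have "0 \<le> (real a - x^2)/x" using a_b x0 by simp
      ultimately have q: "\<bar>(real a - x^2)/x\<bar> \<le> 1/8" by (simp only: abs_of_nonneg)
      have "\<bar>u1 * ((real a - x^2)/x)\<bar> = \<bar>u1\<bar> * \<bar>(real a - x^2)/x\<bar>" by (rule abs_mult)
      also have "\<dots> \<le> \<bar>u1\<bar> * (1/8)" using q by (intro mult_left_mono) auto
      finally have "\<bar>u1 * ((real a - x^2)/x)\<bar> \<le> \<bar>u1\<bar>/8" by simp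
      moreover have "\<bar>u0\<bar> \<le> \<bar>u0 + u1 * ((real a - x^2)/x)\<bar> + \<bar>u1 * ((real a - x^2)/x)\<bar>"
        using abs_triangle_ineq[of "u0 + u1 * ((real a - x^2)/x)" "- (u1 * ((real a - x^2)/x))"] by simp
      ultimately show ?thesis unfolding L_def by linarith
    qed
    show ?thesis
    proof (cases "U/16 \<le> \<bar>L a\<bar>")
      case True thus ?thesis using that[of a] by simp
    next
      case False
      hence "\<bar>u0\<bar> - \<bar>u1\<bar>/8 < U/16" using La by linarith
      hence "U/2 \<le> \<bar>u1\<bar>" using Ule by linarith
      hence "U/16 \<le> \<bar>L (a+m)\<bar>" using d2 False by linarith
      thus ?thesis using that[of "a+m"] by simp
    qed
  qed
  have i0w: "a \<le> i0" "i0 \<le> a + Rn" using i0 mRn by auto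
  have t_i0: "\<tau> \<le> \<bar>t i0\<bar>"
  proof -
    have bi0: "(\<beta> a)^2 / 2 \<le> (\<beta> i0)^2" using i0 bam by auto
    have D: "0 < 512*exp 2*(c2+1)" using c1 c12 by (simp add: add_pos_pos)
    have "4*\<tau>^2 \<le> U^2 / (512*exp 2*(c2+1))"
      unfolding pos_le_divide_eq[OF D] U2 by (rule tauU)
    also have "\<dots> = (1/(exp 2*(c2+1)) / 2) * ((U/16)^2)" by (simp add: power_divide field_simps)
    also have "\<dots> \<le> ((\<beta> a)^2 / 2) * ((L i0)^2)"
    proof (rule mult_mono)
      show "(U/16)^2 \<le> (L i0)^2" using Li0 U0 by (metis abs_le_square_iff abs_of_nonneg divide_nonneg_nonneg zero_le_numeral)
    qed (use ba in auto)
    also have "\<dots> \<le> (\<beta> i0)^2 * (L i0)^2" using bi0 by (intro mult_right_mono) auto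
    also have "\<dots> = (\<beta> i0 * L i0)^2" by (simp add: power_mult_distrib)
    finally have "(2*\<tau>)^2 \<le> (\<beta> i0 * L i0)^2" by (simp add: power_mult_distrib)
    hence s2: "2*\<tau> \<le> \<bar>\<beta> i0 * L i0\<bar>" using tau by (metis abs_le_square_iff abs_of_pos mult_pos_pos zero_less_numeral)
    have "\<bar>e i0\<bar> \<le> \<epsilon>" by (rule errb[OF i0w])
    thus ?thesis using s2 unfolding t_eq \<epsilon>_def using tau by linarith
  qed
  have tail: "\<bar>t i\<bar> < \<tau>" if ti: "a + Rn - 2*T \<le> i" "i \<le> a + Rn" for i
  proof -
    have TRn: "2*T \<le> Rn" using TR Rn_b by linarith
    have ai: "a \<le> i" using ti TRn by linarith
    have ri: "real i \<ge> x^2 + 2*(R/4)"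
    proof -
      have "real (a + Rn - 2*T) = real a + real Rn - 2 * real T" using TRn by simp
      thus ?thesis using ti(1) a_b Rn_b TR by linarith
    qed
    have h1: "1 \<le> R/4" using R1 by simp
    have "(\<beta> i)^2 \<le> N * exp (-(R/4-1) * ((R/4) / (x^2+R/4)))"
      unfolding \<beta>_def by (rule bsq_tail[OF N0 x0 h1]) (use ri in simp)
    also have "\<dots> \<le> N * exp (-(R/4-1) * ((R/4) / ((c2*N)^2+R/4)))"
      by (rule exp_bound_mono[OF N0 h1 zero_le_power2 xx])
    finally have bi: "\<bar>\<beta> i\<bar> \<le> sqrt (N * exp (-(R/4-1) * ((R/4) / ((c2*N)^2+R/4))))"
      by (rule abs_le_sqrt_of_sq)
    have u0b: "\<bar>u0\<bar> \<le> Ub" using abs_le_sqrt_sum4(1)[of u0 u1 u2 u3] Ub by linarith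
    have u1b: "\<bar>u1\<bar> \<le> Ub" using abs_le_sqrt_sum4(2)[of u1 u0 u2 u3] Ub by linarith
    have "\<bar>\<beta> i * L i\<bar> \<le> sqrt (N * exp (-(R/4-1) * ((R/4) / ((c2*N)^2+R/4)))) * (Ub * (1 + \<bar>real i - x^2\<bar>/x))"
      unfolding L_def by (rule comb_bound[OF x0 u0b u1b bi])
    also have "\<dots> \<le> sqrt (N * exp (-(R/4-1) * ((R/4) / ((c2*N)^2+R/4)))) * (Ub * (1 + (R+2)/(c1*N)))"
    proof -
      have "\<bar>real i - x^2\<bar> \<le> R + 2" using win[OF ai ti(2)] by (simp add: abs_le_iff)
      hence "\<bar>real i - x^2\<bar>/x \<le> (R+2)/(c1*N)" using X cN x0 R0 by (intro frac_le) auto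
      moreover have "0 \<le> Ub" using Ub real_sqrt_ge_zero[OF sum4_nonneg[of u0 u1 u2 u3]] by linarith
      ultimately show ?thesis using N0 by (intro mult_left_mono) auto
    qed
    also have "\<dots> \<le> \<tau>/2" using Tl by (simp add: mult.assoc)
    finally have "\<bar>\<beta> i * L i\<bar> \<le> \<tau>/2" .
    moreover have "\<bar>e i\<bar> \<le> \<epsilon>" by (rule errb[OF ai ti(2)])
    ultimately show ?thesis unfolding t_eq \<epsilon>_def using tau by linarith
  qed
  define J where "J = {i \<in> {a..a+Rn}. \<tau> \<le> \<bar>t i\<bar>}"
  define j where "j = Max J"
  have finJ: "finite J" unfolding J_def by simp
  have i0J: "i0 \<in> J" unfolding J_def using i0w t_i0 by simp
  have jJ: "j \<in> J" unfolding j_def using finJ i0J by (intro Max_in) auto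
  have jw: "a \<le> j" "j \<le> a + Rn" and tj: "\<tau> \<le> \<bar>t j\<bar>" using jJ unfolding J_def by auto
  have jmax: "i \<le> j" if "i \<in> J" for i unfolding j_def using finJ that by simp
  have jT: "j + 2*T \<le> a + Rn"
  proof (rule ccontr)
    assume "\<not> j + 2*T \<le> a + Rn"
    hence "a + Rn - 2*T \<le> j" by simp
    hence "\<bar>t j\<bar> < \<tau>" using tail jw by simp
    thus False using tj by simp
  qed
  have small: "\<bar>t i\<bar> < \<tau>" if "j < i" "i \<le> a + Rn" for i
  proof (rule ccontr)
    assume "\<not> \<bar>t i\<bar> < \<tau>"
    hence "i \<in> J" unfolding J_def using that jw by auto
    thus False using jmax that by fastforce
  qed
  have x2p: "0 < x^2" using x0 by simp
  have del0: "0 \<le> \<delta>" unfolding \<delta>_def using R0 by simp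
  have del1: "\<delta> \<le> 1/8"
  proof -
    have "16*R \<le> x^2" using R2 xx1 by linarith
    thus ?thesis unfolding \<delta>_def using x2p by (simp add: field_simps)
  qed
  have dx: "\<delta> * x^2 = 2*R" unfolding \<delta>_def using x2p by simp
  have ratio: "(1-\<delta>) * \<beta> (j+k) \<le> \<beta> (j+k+1)" if "k < 2*T" for k
  proof -
    define i where "i = j + k"
    have ii: "i + 1 \<le> a + Rn" unfolding i_def using that jT by simp
    have "real (Suc i) \<le> x^2 + R + 1" using win[of "i+1"] ii jw unfolding i_def by simp
    hence "(1-\<delta>) * real (Suc i) \<le> (1-\<delta>) * (x^2 + R + 1)" using del1 by (intro mult_left_mono) auto
    also have "\<dots> = x^2 + 1 - R - \<delta> * (R + 1)" using dx by (simp add: algebra_simps)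
    also have "\<dots> \<le> x^2" using R1 del0 R0 by (smt (verit) mult_nonneg_nonneg)
    finally have A: "(1-\<delta>) * real (Suc i) \<le> x^2" .
    have "(1-\<delta>)^2 * real (Suc i) \<le> (1-\<delta>) * real (Suc i)"
      using del0 del1 by (intro mult_right_mono) (auto simp: power2_eq_square mult_left_le_one_le)
    with A have "(1-\<delta>)^2 * real (Suc i) \<le> x^2" by linarith
    hence "sqrt ((1-\<delta>)^2 * real (Suc i)) \<le> sqrt (x^2)" by (rule real_sqrt_le_mono)
    hence B: "(1-\<delta>) * sqrt (real (Suc i)) \<le> x" using del1 x0 by (simp add: real_sqrt_mult)
    have sp: "0 < sqrt (real (Suc i))" by simp
    have "(1-\<delta>) \<le> x / sqrt (real (Suc i))" using B sp by (simp add: field_simps)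
    hence "(1-\<delta>) * \<beta> i \<le> (x / sqrt (real (Suc i))) * \<beta> i" using b0 by (intro mult_right_mono) auto
    also have "\<dots> = \<beta> (Suc i)" unfolding \<beta>_def by (simp add: b_Suc)
    finally show ?thesis unfolding i_def by simp
  qed
  have dT: "8 * real T * \<delta> \<le> 1"
  proof -
    have "8 * real T * \<delta> \<le> 8 * (x^2/(16*R)) * \<delta>" using T_b del0 by (intro mult_right_mono) auto
    also have "\<dots> = 1" unfolding \<delta>_def using x2p R1 by (simp add: field_simps)
    finally show ?thesis .
  qed
  have Laff: "L i = (u0 - u1*x) + (u1/x) * real i" for i unfolding L_def using x0 by (simp add: field_simps power2_eq_square)
  have errj: "\<bar>t i - \<beta> i * L i\<bar> \<le> \<epsilon>" if "j \<le> i" "i \<le> j + 2*T" for i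
    using errb[of i] that jw jT unfolding t_eq by simp
  have eps_tj: "\<epsilon> \<le> \<bar>t j\<bar>" unfolding \<epsilon>_def using tj tau by linarith
  have SL: "real T * ((\<bar>t j\<bar> - \<epsilon>)^2/40 - 2*\<epsilon>^2) \<le> (\<Sum>i\<in>{j+1..j+2*T}. (t i)^2)"
    by (rule slow_lemma[OF b0 ratio del0 _ dT Laff errj eps_tj]) (use del1 in auto)
  have "real T * (\<tau>^2/100) \<le> real T * ((\<bar>t j\<bar> - \<epsilon>)^2/40 - 2*\<epsilon>^2)"
  proof (rule mult_left_mono)
    have "(19*\<tau>/20)^2 \<le> (\<bar>t j\<bar> - \<epsilon>)^2" unfolding \<epsilon>_def using tj tau by (intro power_mono) auto
    moreover have "(19*\<tau>/20)^2 = 361/400 * \<tau>^2" by (simp add: power2_eq_square)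
    moreover have "\<epsilon>^2 = \<tau>^2/400" unfolding \<epsilon>_def by (simp add: power2_eq_square)
    ultimately show "\<tau>^2/100 \<le> (\<bar>t j\<bar> - \<epsilon>)^2/40 - 2*\<epsilon>^2" using zero_le_power2[of \<tau>] by linarith
  qed simp
  also note SL
  also have "(\<Sum>i\<in>{j+1..j+2*T}. (t i)^2) \<le> 5 * (\<Sum>i\<in>{j+1..j+2*T}. 1 - cos (t i))"
  proof -
    have "(\<Sum>i\<in>{j+1..j+2*T}. (t i)^2) \<le> (\<Sum>i\<in>{j+1..j+2*T}. 5 * (1 - cos (t i)))"
    proof (rule sum_mono)
      fix i assume "i \<in> {j+1..j+2*T}"
      hence "\<bar>t i\<bar> < \<tau>" using small jT by auto
      hence "\<bar>t i\<bar> \<le> 1" using tau by linarith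
      thus "(t i)^2 \<le> 5 * (1 - cos (t i))" using one_minus_cos_ge by fastforce
    qed
    thus ?thesis by (simp add: sum_distrib_left)
  qed
  also have "(\<Sum>i\<in>{j+1..j+2*T}. 1 - cos (t i)) \<le> (\<Sum>i\<in>{1..n}. 1 - cos (t i))"
    by (rule sum_mono2) (use jT n_big in auto)
  finally have F: "real T * (\<tau>^2/100) \<le> 5 * (\<Sum>i\<in>{1..n}. 1 - cos (t i))" by simp
  have "((c1*N)^2/(16*R) - 1) \<le> real T"
  proof -
    have "(c1*N)^2/(16*R) \<le> x^2/(16*R)" using xx1 R1 by (intro divide_right_mono) auto
    thus ?thesis using T_b by linarith
  qed
  hence "((c1*N)^2/(16*R) - 1) * \<tau>^2/500 \<le> real T * \<tau>^2/500" by (intro divide_right_mono mult_right_mono) auto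
  also have "\<dots> \<le> (\<Sum>i\<in>{1..n}. 1 - cos (t i))" using F by simp
  finally show ?thesis unfolding t_def .
qed


lemma trig_ineq: "1 - cos (A - B) \<le> 2*(1 - cos A) + 2*(1 - cos (B::real))"
proof -
  have c: "1 - cos u = 2 * (sin (u/2))^2" for u::real using cos_double_sin[of "u/2"] by simp
  have s: "sin ((A - B)/2) = sin (A/2) * cos (B/2) - cos (A/2) * sin (B/2)"
    using sin_diff[of "A/2" "B/2"] by (simp add: diff_divide_distrib)
  have "\<bar>sin ((A - B)/2)\<bar> \<le> \<bar>sin (A/2)\<bar> * \<bar>cos (B/2)\<bar> + \<bar>cos (A/2)\<bar> * \<bar>sin (B/2)\<bar>"
    unfolding s by (metis abs_mult abs_triangle_ineq4)
  also have "\<dots> \<le> \<bar>sin (A/2)\<bar> * 1 + 1 * \<bar>sin (B/2)\<bar>"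
    by (intro add_mono mult_left_mono mult_right_mono) auto
  finally have "\<bar>sin ((A - B)/2)\<bar> \<le> \<bar>sin (A/2)\<bar> + \<bar>sin (B/2)\<bar>" by simp
  hence "\<bar>sin ((A - B)/2)\<bar>^2 \<le> (\<bar>sin (A/2)\<bar> + \<bar>sin (B/2)\<bar>)^2" by (rule power_mono) simp
  also have "\<dots> \<le> 2 * (sin (A/2))^2 + 2 * (sin (B/2))^2"
    using sq_diff_le2[of "\<bar>sin (A/2)\<bar>" "-\<bar>sin (B/2)\<bar>"] by simp
  finally show ?thesis unfolding c[of "A-B"] c[of A] c[of B] by simp
qed

lemma char_abs:
  assumes P: "prob_space M" and xi: "\<xi> \<in> borel_measurable M"
  obtains \<theta> where "cmod (\<integral>\<omega>. exp (\<i> * complex_of_real (\<xi> \<omega> * t)) \<partial>M) = (\<integral>\<omega>. cos (\<xi> \<omega> * t - \<theta>) \<partial>M)"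
    and "integrable M (\<lambda>\<omega>. cos (\<xi> \<omega> * t - \<theta>))"
proof -
  interpret prob_space M by (rule P)
  define z where "z = (\<integral>\<omega>. exp (\<i> * complex_of_real (\<xi> \<omega> * t)) \<partial>M)"
  define \<theta> where "\<theta> = Arg z"
  have mf: "(\<lambda>\<omega>. cis (-\<theta>) * exp (\<i> * complex_of_real (\<xi> \<omega> * t))) \<in> borel_measurable M"
  proof -
    have "(\<lambda>s. cis (-\<theta>) * exp (\<i> * complex_of_real (s * t))) \<in> borel_measurable borel"
      by (intro borel_measurable_continuous_onI continuous_intros)
    from measurable_compose[OF xi this] show ?thesis by simp
  qed
  have intf: "integrable M (\<lambda>\<omega>. cis (-\<theta>) * exp (\<i> * complex_of_real (\<xi> \<omega> * t)))"
    by (rule integrable_const_bound[where B=1]) (use mf in \<open>auto simp: norm_mult\<close>)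
  have pt: "Re (cis (-\<theta>) * exp (\<i> * complex_of_real (\<xi> \<omega> * t))) = cos (\<xi> \<omega> * t - \<theta>)" for \<omega>
  proof -
    have "exp (\<i> * complex_of_real (\<xi> \<omega> * t)) = cis (\<xi> \<omega> * t)" by (simp add: cis_conv_exp)
    hence "cis (-\<theta>) * exp (\<i> * complex_of_real (\<xi> \<omega> * t)) = cis (\<xi> \<omega> * t - \<theta>)"
      by (simp add: cis_mult)
    thus ?thesis by simp
  qed
  have zz: "cis (-\<theta>) * z = complex_of_real (cmod z)"
  proof -
    have "z = rcis (cmod z) \<theta>" unfolding \<theta>_def by (simp add: rcis_cmod_Arg)
    hence "cis (-\<theta>) * z = cis (-\<theta>) * (complex_of_real (cmod z) * cis \<theta>)" by (metis rcis_def)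
    also have "\<dots> = complex_of_real (cmod z) * (cis (-\<theta>) * cis \<theta>)" by (simp add: mult_ac)
    also have "cis (-\<theta>) * cis \<theta> = 1" by (simp add: cis_mult)
    finally show ?thesis by simp
  qed
  have "cmod z = Re (cis (-\<theta>) * z)" unfolding zz by simp
  also have "cis (-\<theta>) * z = (\<integral>\<omega>. cis (-\<theta>) * exp (\<i> * complex_of_real (\<xi> \<omega> * t)) \<partial>M)"
    unfolding z_def by (rule integral_mult_right_zero[symmetric])
  also have "Re \<dots> = (\<integral>\<omega>. Re (cis (-\<theta>) * exp (\<i> * complex_of_real (\<xi> \<omega> * t))) \<partial>M)"
    by (rule integral_Re[OF intf, symmetric])
  also have "\<dots> = (\<integral>\<omega>. cos (\<xi> \<omega> * t - \<theta>) \<partial>M)" unfolding pt ..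
  finally have A: "cmod z = (\<integral>\<omega>. cos (\<xi> \<omega> * t - \<theta>) \<partial>M)" .
  have B: "integrable M (\<lambda>\<omega>. cos (\<xi> \<omega> * t - \<theta>))"
    using integrable_Re[OF intf] unfolding pt .
  show ?thesis using that[OF A[unfolded z_def] B] .
qed

lemma prob_main:
  fixes M :: "'a measure" and \<xi> :: "'a \<Rightarrow> real" and S :: "nat set" and tt :: "nat \<Rightarrow> real"
    and a1 b1 a2 b2 \<Lambda> p :: real
  assumes P: "prob_space M" and xi: "\<xi> \<in> borel_measurable M" and S: "finite S"
    and p1: "p \<le> measure M {\<omega>\<in>space M. a1 \<le> \<xi> \<omega> \<and> \<xi> \<omega> \<le> b1}"
    and p2: "p \<le> measure M {\<omega>\<in>space M. -b2 \<le> \<xi> \<omega> \<and> \<xi> \<omega> \<le> -a2}"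
    and L0: "0 \<le> \<Lambda>"
    and G: "\<And>\<sigma>. a1 + a2 \<le> \<sigma> \<Longrightarrow> \<sigma> \<le> b1 + b2 \<Longrightarrow> 4*\<Lambda> \<le> (\<Sum>i\<in>S. 1 - cos (\<sigma> * tt i))"
  shows "(\<Prod>i\<in>S. cmod (\<integral>\<omega>. exp (\<i> * complex_of_real (\<xi> \<omega> * tt i)) \<partial>M)) \<le> exp (-(p*\<Lambda>))"
proof -
  interpret prob_space M by (rule P)
  define \<phi> where "\<phi> i = cmod (\<integral>\<omega>. exp (\<i> * complex_of_real (\<xi> \<omega> * tt i)) \<partial>M)" for i
  have "\<forall>i. \<exists>th. \<phi> i = (\<integral>\<omega>. cos (\<xi> \<omega> * tt i - th) \<partial>M) \<and> integrable M (\<lambda>\<omega>. cos (\<xi> \<omega> * tt i - th))"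
  proof
    fix i
    obtain th where "cmod (\<integral>\<omega>. exp (\<i> * complex_of_real (\<xi> \<omega> * tt i)) \<partial>M) = (\<integral>\<omega>. cos (\<xi> \<omega> * tt i - th) \<partial>M)"
      and "integrable M (\<lambda>\<omega>. cos (\<xi> \<omega> * tt i - th))" by (rule char_abs[OF P xi])
    thus "\<exists>th. \<phi> i = (\<integral>\<omega>. cos (\<xi> \<omega> * tt i - th) \<partial>M) \<and> integrable M (\<lambda>\<omega>. cos (\<xi> \<omega> * tt i - th))"
      unfolding \<phi>_def by blast
  qed
  then obtain th where th: "\<And>i. \<phi> i = (\<integral>\<omega>. cos (\<xi> \<omega> * tt i - th i) \<partial>M)"
    and thi: "\<And>i. integrable M (\<lambda>\<omega>. cos (\<xi> \<omega> * tt i - th i))" by metis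
  define H where "H s = (\<Sum>i\<in>S. 1 - cos (s * tt i - th i))" for s
  have Hnn: "0 \<le> H s" for s unfolding H_def by (intro sum_nonneg) auto
  have dich: "(\<forall>s. a1 \<le> s \<and> s \<le> b1 \<longrightarrow> \<Lambda> \<le> H s) \<or> (\<forall>s. -b2 \<le> s \<and> s \<le> -a2 \<longrightarrow> \<Lambda> \<le> H s)"
  proof (rule ccontr)
    assume "\<not> ?thesis"
    then obtain s1 s2 where s1: "a1 \<le> s1" "s1 \<le> b1" "H s1 < \<Lambda>" and s2: "-b2 \<le> s2" "s2 \<le> -a2" "H s2 < \<Lambda>"
      by (auto simp: not_le)
    have "4*\<Lambda> \<le> (\<Sum>i\<in>S. 1 - cos ((s1 - s2) * tt i))" using G[of "s1 - s2"] s1 s2 by simp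
    also have "\<dots> \<le> (\<Sum>i\<in>S. 2*(1 - cos (s1 * tt i - th i)) + 2*(1 - cos (s2 * tt i - th i)))"
    proof (rule sum_mono)
      fix i
      have "(s1 - s2) * tt i = (s1 * tt i - th i) - (s2 * tt i - th i)" by (simp add: algebra_simps)
      thus "1 - cos ((s1 - s2) * tt i) \<le> 2*(1 - cos (s1 * tt i - th i)) + 2*(1 - cos (s2 * tt i - th i))"
        using trig_ineq by presburger
    qed
    also have "\<dots> = 2 * H s1 + 2 * H s2" unfolding H_def by (simp only: sum.distrib sum_distrib_left)
    finally show False using s1 s2 by linarith
  qed
  have intc: "integrable M (\<lambda>\<omega>. 1 - cos (\<xi> \<omega> * tt i - th i))" for i
    by (intro Bochner_Integration.integrable_diff integrable_const thi)
  have intH: "integrable M (\<lambda>\<omega>. H (\<xi> \<omega>))" unfolding H_def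
    by (intro Bochner_Integration.integrable_sum intc)
  have one_minus: "1 - \<phi> i = (\<integral>\<omega>. 1 - cos (\<xi> \<omega> * tt i - th i) \<partial>M)" for i
  proof -
    have "(\<integral>\<omega>. 1 - cos (\<xi> \<omega> * tt i - th i) \<partial>M) = (\<integral>\<omega>. 1 \<partial>M) - (\<integral>\<omega>. cos (\<xi> \<omega> * tt i - th i) \<partial>M)"
      by (rule Bochner_Integration.integral_diff[OF integrable_const thi])
    also have "(\<integral>\<omega>. 1 \<partial>M) = (1::real)" by (simp add: prob_space)
    finally show ?thesis using th[of i] by simp
  qed
  have sumeq: "(\<Sum>i\<in>S. 1 - \<phi> i) = (\<integral>\<omega>. H (\<xi> \<omega>) \<partial>M)"
    unfolding one_minus H_def by (rule Bochner_Integration.integral_sum[symmetric]) (rule intc)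
  have lower: "p * \<Lambda> \<le> (\<integral>\<omega>. H (\<xi> \<omega>) \<partial>M)"
  proof -
    have key: "p * \<Lambda> \<le> (\<integral>\<omega>. H (\<xi> \<omega>) \<partial>M)"
      if A: "A = {\<omega>\<in>space M. lo \<le> \<xi> \<omega> \<and> \<xi> \<omega> \<le> hi}" and pA: "p \<le> measure M A"
        and HA: "\<forall>s. lo \<le> s \<and> s \<le> hi \<longrightarrow> \<Lambda> \<le> H s" for A lo hi
    proof -
      have Aset: "A \<in> sets M"
      proof -
        have "A = \<xi> -` {lo..hi} \<inter> space M" unfolding A by auto
        thus ?thesis using measurable_sets[OF xi, of "{lo..hi}"] by simp
      qed
      have intI: "integrable M (\<lambda>\<omega>. \<Lambda> * indicator A \<omega>)"
        by (intro integrable_mult_right integrable_real_indicator Aset) (simp add: emeasure_eq_measure)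
      have "p * \<Lambda> \<le> measure M A * \<Lambda>" using pA L0 by (rule mult_right_mono)
      also have "\<dots> = (\<integral>\<omega>. \<Lambda> * indicator A \<omega> \<partial>M)"
        using Aset sets.sets_into_space[OF Aset] by (simp add: Int_absorb2)
      also have "\<dots> \<le> (\<integral>\<omega>. H (\<xi> \<omega>) \<partial>M)"
      proof (rule integral_mono[OF intI intH])
        fix \<omega> assume "\<omega> \<in> space M"
        show "\<Lambda> * indicator A \<omega> \<le> H (\<xi> \<omega>)"
          using HA Hnn unfolding A by (auto simp: indicator_def)
      qed
      finally show ?thesis .
    qed
    from dich show ?thesis
    proof
      assume "\<forall>s. a1 \<le> s \<and> s \<le> b1 \<longrightarrow> \<Lambda> \<le> H s"
      thus ?thesis by (rule key[OF refl p1])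
    next
      assume "\<forall>s. -b2 \<le> s \<and> s \<le> -a2 \<longrightarrow> \<Lambda> \<le> H s"
      thus ?thesis by (rule key[OF refl p2])
    qed
  qed
  have "(\<Prod>i\<in>S. \<phi> i) \<le> (\<Prod>i\<in>S. exp (-(1 - \<phi> i)))"
  proof (rule prod_mono)
    fix i
    show "0 \<le> \<phi> i \<and> \<phi> i \<le> exp (-(1 - \<phi> i))"
      unfolding \<phi>_def using exp_ge_add_one_self[of "-(1 - \<phi> i)"] by (simp add: \<phi>_def)
  qed
  also have "\<dots> = exp (\<Sum>i\<in>S. -(1 - \<phi> i))" using S by (simp only: exp_sum)
  also have "\<dots> = exp (-(\<Sum>i\<in>S. 1 - \<phi> i))" by (simp only: sum_negf)
  also have "\<dots> \<le> exp (-(p*\<Lambda>))" unfolding sumeq using lower by simp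
  finally show ?thesis unfolding \<phi>_def .
qed


lemma pos_part_positive:
  fixes f :: "'a \<Rightarrow> real"
  assumes P: "prob_space M" and fm: "f \<in> borel_measurable M" and fi: "integrable M f"
    and f0: "(\<integral>\<omega>. f \<omega> \<partial>M) = 0" and f2: "(\<integral>\<omega>. (f \<omega>)^2 \<partial>M) = 1"
  shows "0 < measure M {\<omega>\<in>space M. 0 < f \<omega>}"
proof (rule ccontr)
  interpret prob_space M by (rule P)
  assume "\<not> ?thesis"
  hence m0: "measure M {\<omega>\<in>space M. 0 < f \<omega>} = 0" using measure_nonneg[of M] by (meson not_le order_antisym)
  have Aset: "{\<omega>\<in>space M. 0 < f \<omega>} \<in> sets M" using fm by measurable
  have "emeasure M {\<omega>\<in>space M. 0 < f \<omega>} = 0" using m0 by (simp add: emeasure_eq_measure)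
  hence ae: "AE \<omega> in M. f \<omega> \<le> 0" by (subst AE_iff_measurable[OF Aset]) (auto simp: not_le)
  have "(\<integral>\<omega>. - f \<omega> \<partial>M) = 0" using f0 by simp
  moreover have "AE \<omega> in M. 0 \<le> - f \<omega>" using ae by auto
  ultimately have "AE \<omega> in M. - f \<omega> = 0" using integral_nonneg_eq_0_iff_AE[of M "\<lambda>\<omega>. - f \<omega>"] fi by auto
  hence "AE \<omega> in M. (f \<omega>)^2 = 0" by auto
  hence "(\<integral>\<omega>. (f \<omega>)^2 \<partial>M) = (\<integral>\<omega>. 0 \<partial>M)" using fm by (intro integral_cong_AE) auto
  thus False using f2 by simp
qed

lemma pos_interval:
  fixes f :: "'a \<Rightarrow> real"
  assumes P: "prob_space M" and fm: "f \<in> borel_measurable M"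
    and pos: "0 < measure M {\<omega>\<in>space M. 0 < f \<omega>}"
  shows "\<exists>a b. 0 < a \<and> a \<le> b \<and> 0 < measure M {\<omega>\<in>space M. a \<le> f \<omega> \<and> f \<omega> \<le> b}"
proof (rule ccontr)
  interpret prob_space M by (rule P)
  assume nex: "\<not> ?thesis"
  have z: "measure M {\<omega>\<in>space M. 1/real (Suc k) \<le> f \<omega> \<and> f \<omega> \<le> real (Suc k)} = 0" for k
  proof -
    have a0: "0 < 1/real (Suc k)" by simp
    have ab: "1/real (Suc k) \<le> real (Suc k)"
    proof -
      have "1/real (Suc k) \<le> 1" by simp
      also have "1 \<le> real (Suc k)" by simp
      finally show ?thesis .
    qed
    have "\<not> 0 < measure M {\<omega>\<in>space M. 1/real (Suc k) \<le> f \<omega> \<and> f \<omega> \<le> real (Suc k)}"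
      using nex a0 ab by blast
    thus ?thesis using measure_nonneg[of M] by (meson not_le order_antisym)
  qed
  define B where "B k = {\<omega>\<in>space M. 1/real (Suc k) \<le> f \<omega> \<and> f \<omega> \<le> real (Suc k)}" for k
  have Bs: "B k \<in> sets M" for k unfolding B_def using fm by measurable
  have "B k \<in> null_sets M" for k using z[of k] Bs[of k] unfolding B_def by (simp add: null_sets_def emeasure_eq_measure)
  hence U: "\<Union> (range B) \<in> null_sets M" by (rule null_sets_UN)
  have "{\<omega>\<in>space M. 0 < f \<omega>} \<subseteq> \<Union> (range B)"
  proof
    fix \<omega> assume w: "\<omega> \<in> {\<omega>\<in>space M. 0 < f \<omega>}"
    obtain k where k: "max (f \<omega>) (1 / f \<omega>) < real k" using reals_Archimedean2 by blast
    have "1/real (Suc k) \<le> f \<omega>"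
    proof -
      have "1 / f \<omega> < real (Suc k)" using k by simp
      thus ?thesis using w by (simp add: field_simps)
    qed
    moreover have "f \<omega> \<le> real (Suc k)" using k by simp
    ultimately show "\<omega> \<in> \<Union> (range B)" using w unfolding B_def by auto
  qed
  moreover have "{\<omega>\<in>space M. 0 < f \<omega>} \<in> sets M" using fm by measurable
  ultimately have "{\<omega>\<in>space M. 0 < f \<omega>} \<in> null_sets M"
    using U null_sets_subset by blast
  hence "measure M {\<omega>\<in>space M. 0 < f \<omega>} = 0" by (simp add: null_sets_def emeasure_eq_measure)
  thus False using pos by simp
qed


lemma asym_conds:
  fixes c1 c2 e eg A b t C p :: real and K :: nat
  assumes c1: "0 < c1" and c12: "c1 < c2" and e: "e = eg/2" and eg0: "0 < eg" and eg1: "eg < 1/2"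
    and b: "0 < b" and t: "0 < t" and p: "0 < p"
  shows "eventually (\<lambda>N. 1 \<le> N \<and> 8 \<le> c1*N \<and> 4 \<le> N powr (1+e) \<and> 16 * N powr (1+e) \<le> (c1*N)^2
     \<and> N powr (1+e) + 2 \<le> N^2 \<and> c2*N/4 + 2 \<le> N powr (1+e)
     \<and> 1 + (c2*N)^2/(8*N powr (1+e)) \<le> N powr (1+e)/2
     \<and> sqrt (N * exp (-(N powr (1+e)/4-1)*((N powr (1+e)/4)/((c2*N)^2+N powr (1+e)/4)))) * (b * sqrt (N powr A)) * (1 + (N powr (1+e)+2)/(c1*N)) \<le> t/2
     \<and> N powr (1+e) + 2 \<le> c1*N*N powr eg \<and> 1 \<le> c1*N*N powr eg/2
     \<and> sqrt (N * exp (-(c1*N*N powr eg/2 - 1)*((c1*N*N powr eg/2)/((c2*N)^2 + c1*N*N powr eg/2)))) * (b * sqrt (N powr A)) * (1 + (2*(c2*N)^2+N powr (1+e)+2)/(c1*N)) \<le> t/20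
     \<and> 4 * (C * ln N / p) + 2 * real K \<le> ((c1*N)^2/(16*N powr (1+e)) - 1) * t^2/500) at_top"
proof -
  have e0: "0 < e" and e1: "e < 1/4" using e eg0 eg1 by simp_all
  have c2: "0 < c2" using c1 c12 by simp
  have e0': "0 < eg/2" and e1': "eg/2 < 1/4" using eg0 eg1 by simp_all
  note a = c1 c2 e0' e1' eg0 eg1 b t p
  show ?thesis
    unfolding e
    apply (intro eventually_conj)
    using a by real_asymp+
qed


lemma G_bound:
  fixes N x y c1 c2 R \<tau> Ub \<epsilon>g \<rho> \<sigma> :: real and n d :: nat and \<eta> :: "nat \<Rightarrow> real"
  assumes d: "d \<in> {1,2,4}"
    and N1: "1 \<le> N" and c1: "0 < c1" and c12: "c1 \<le> c2"
    and X: "c1*N \<le> x" "x \<le> c2*N" and X8: "8 \<le> c1*N"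
    and nb: "(c2+1)*N \<le> sqrt (real n)"
    and tau: "0 < \<tau>" "\<tau> \<le> 1" and tauR: "4*\<tau>^2*(512*exp 2*(c2+1)) \<le> \<rho>/2"
    and Srho: "\<rho> \<le> \<sigma>^2 * (\<Sum>j<d. (\<eta> j)^2)"
    and SUb: "sqrt (\<sigma>^2 * (\<Sum>j<d. (\<eta> j)^2)) \<le> Ub"
    and R1: "4 \<le> R" and R2: "16*R \<le> (c1*N)^2" and R3: "R + 2 \<le> N^2" and R4: "c2*N/4 + 2 \<le> R"
    and R5: "1 + (c2*N)^2/(8*R) \<le> R/2"
    and Tl: "sqrt (N * exp (-(R/4-1)*((R/4)/((c2*N)^2+R/4)))) * Ub * (1 + (R+2)/(c1*N)) \<le> \<tau>/2"
    and Ey1: "R + 2 \<le> c1*N*N powr \<epsilon>g" and Ey2: "1 \<le> c1*N*N powr \<epsilon>g/2"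
    and Ey: "sqrt (N * exp (-(c1*N*N powr \<epsilon>g/2 - 1)*((c1*N*N powr \<epsilon>g/2)/((c2*N)^2 + c1*N*N powr \<epsilon>g/2)))) * Ub * (1 + (2*(c2*N)^2+R+2)/(c1*N)) \<le> \<tau>/20"
    and Y4: "d = 4 \<longrightarrow> (c1*N \<le> y \<and> y \<le> c2*N \<and> N powr \<epsilon>g \<le> \<bar>x - y\<bar>)"
  shows "((c1*N)^2/(16*R) - 1) * \<tau>^2/500 \<le> (\<Sum>i\<in>{1..n}. 1 - cos (\<sigma> * (\<Sum>j<d. weyl_w N x y i j * \<eta> j)))"
proof -
  define u where "u k = (if k < d then \<sigma> * \<eta> k else 0)" for k
  have wt: "\<sigma> * (\<Sum>j<d. weyl_w N x y i j * \<eta> j) = weyl_b N i x * u 0 + weyl_c N i x * u 1 + weyl_b N i y * u 2 + weyl_c N i y * u 3" for i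
    using d by (auto simp: u_def weyl_w_def eval_nat_numeral algebra_simps)
  have us: "u 0^2 + u 1^2 + u 2^2 + u 3^2 = \<sigma>^2 * (\<Sum>j<d. (\<eta> j)^2)"
    using d by (auto simp: u_def eval_nat_numeral algebra_simps power_mult_distrib)
  have Ub': "sqrt (u 0^2 + u 1^2 + u 2^2 + u 3^2) \<le> Ub" unfolding us by (rule SUb)
  have rho': "\<rho> \<le> u 0^2 + u 1^2 + u 2^2 + u 3^2" unfolding us by (rule Srho)
  show ?thesis
  proof (cases "u 2^2 + u 3^2 \<le> u 0^2 + u 1^2")
    case True
    hence "\<rho>/2 \<le> u 0^2 + u 1^2" using rho' by linarith
    hence tU: "4*\<tau>^2*(512*exp 2*(c2+1)) \<le> u 0^2 + u 1^2" using tauR by linarith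
    have Y: "(u 2 = 0 \<and> u 3 = 0) \<or> (c1*N \<le> y \<and> y \<le> c2*N \<and> N powr \<epsilon>g \<le> \<bar>x - y\<bar>)"
      using Y4 d by (auto simp: u_def)
    show ?thesis unfolding wt
      by (rule core_x[OF N1 c1 c12 X X8 nb tau tU Ub' R1 R2 R3 R4 R5 Tl Y Ey1 Ey2 Ey])
  next
    case False
    hence "\<rho>/2 \<le> u 2^2 + u 3^2" using rho' by linarith
    hence tU: "4*\<tau>^2*(512*exp 2*(c2+1)) \<le> u 2^2 + u 3^2" using tauR by linarith
    have d4: "d = 4"
    proof (rule ccontr)
      assume "d \<noteq> 4"
      hence "u 2 = 0" "u 3 = 0" using d by (auto simp: u_def)
      thus False using False by simp
    qed
    have yy: "c1*N \<le> y" "y \<le> c2*N" and xy: "N powr \<epsilon>g \<le> \<bar>x - y\<bar>" using Y4 d4 by auto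
    have Y: "(u 0 = 0 \<and> u 1 = 0) \<or> (c1*N \<le> x \<and> x \<le> c2*N \<and> N powr \<epsilon>g \<le> \<bar>y - x\<bar>)"
      using X xy by (simp add: abs_minus_commute)
    have Ub'': "sqrt (u 2^2 + u 3^2 + u 0^2 + u 1^2) \<le> Ub" using Ub' by (simp add: add_ac)
    have "((c1*N)^2/(16*R) - 1) * \<tau>^2/500 \<le> (\<Sum>i\<in>{1..n}. 1 - cos (weyl_b N i y * u 2 + weyl_c N i y * u 3 + weyl_b N i x * u 0 + weyl_c N i x * u 1))"
      by (rule core_x[OF N1 c1 c12 yy X8 nb tau tU Ub'' R1 R2 R3 R4 R5 Tl Y Ey1 Ey2 Ey])
    thus ?thesis unfolding wt by (simp add: add_ac)
  qed
qed

theorem theorem3p18: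
  fixes M :: "'a measure" and \<xi> :: "'a \<Rightarrow> real"
    and A C r \<epsilon>g c1 c2 :: real and K d :: nat
  assumes "prob_space M"
    and "\<xi> \<in> borel_measurable M"
    and "integrable M \<xi>" and "(\<integral>\<omega>. \<xi> \<omega> \<partial>M) = 0"
    and "integrable M (\<lambda>\<omega>. (\<xi> \<omega>)^2)" and "(\<integral>\<omega>. (\<xi> \<omega>)^2 \<partial>M) = 1"
    and "0 < A" and "0 < C" and "0 < K" and "0 < r"
    and "0 < \<epsilon>g" and "\<epsilon>g < 1/2"
    and "0 < c1" and "c1 < c2"
    and "d \<in> {1, 2, 4}"
  shows "\<exists>N0. \<forall>N::real \<ge> N0. \<forall>n::nat. \<forall>x y::real.
           (c2 * N \<le> sqrt (real n) - N
            \<and> x \<in> {c1 * N .. c2 * N}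
            \<and> (d = 4 \<longrightarrow> y \<in> {c1 * N .. c2 * N} \<and> \<bar>x - y\<bar> \<ge> N powr \<epsilon>g))
           \<longrightarrow> (\<forall>I \<subseteq> {1..n}. card I \<le> K \<longrightarrow>
                (\<forall>\<eta>::nat \<Rightarrow> real. r \<le> (\<Sum>j<d. (\<eta> j)^2) \<and> (\<Sum>j<d. (\<eta> j)^2) \<le> N powr A
                   \<longrightarrow> norm (\<Prod>i\<in>{1..n} - I. weyl_phi M \<xi> d N x y i \<eta>) \<le> N powr (- C)))"
proof -
  note P = assms(1) and xi = assms(2)
  have c1: "0 < c1" and c12: "c1 < c2" and C0: "0 < C" and r0: "0 < r" using assms by auto
  have eg0: "0 < \<epsilon>g" and eg1: "\<epsilon>g < 1/2" and dd: "d \<in> {1,2,4}" using assms by auto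
  interpret prob_space M by (rule P)
  have pos1: "0 < measure M {\<omega>\<in>space M. 0 < \<xi> \<omega>}"
    by (rule pos_part_positive[OF P xi assms(3,4,6)])
  obtain a1 b1 where ab1: "0 < a1" "a1 \<le> b1" and pp1: "0 < measure M {\<omega>\<in>space M. a1 \<le> \<xi> \<omega> \<and> \<xi> \<omega> \<le> b1}"
    using pos_interval[OF P xi pos1] by blast
  have xim: "(\<lambda>\<omega>. - \<xi> \<omega>) \<in> borel_measurable M" using xi by simp
  have pos2: "0 < measure M {\<omega>\<in>space M. 0 < - \<xi> \<omega>}"
    by (rule pos_part_positive[OF P xim]) (use assms(3,4,6) in auto)
  obtain a2 b2 where ab2: "0 < a2" "a2 \<le> b2" and pp2': "0 < measure M {\<omega>\<in>space M. a2 \<le> - \<xi> \<omega> \<and> - \<xi> \<omega> \<le> b2}"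
    using pos_interval[OF P xim pos2] by blast
  have seteq: "{\<omega>\<in>space M. a2 \<le> - \<xi> \<omega> \<and> - \<xi> \<omega> \<le> b2} = {\<omega>\<in>space M. -b2 \<le> \<xi> \<omega> \<and> \<xi> \<omega> \<le> -a2}" by auto
  have pp2: "0 < measure M {\<omega>\<in>space M. -b2 \<le> \<xi> \<omega> \<and> \<xi> \<omega> \<le> -a2}" using pp2' unfolding seteq .
  define p where "p = min (measure M {\<omega>\<in>space M. a1 \<le> \<xi> \<omega> \<and> \<xi> \<omega> \<le> b1}) (measure M {\<omega>\<in>space M. -b2 \<le> \<xi> \<omega> \<and> \<xi> \<omega> \<le> -a2})"
  have p0: "0 < p" unfolding p_def using pp1 pp2 by simp
  define \<alpha>0 where "\<alpha>0 = a1 + a2"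
  define \<beta>0 where "\<beta>0 = b1 + b2"
  have al0: "0 < \<alpha>0" and alb: "\<alpha>0 \<le> \<beta>0" unfolding \<alpha>0_def \<beta>0_def using ab1 ab2 by auto
  have be0: "0 < \<beta>0" using al0 alb by simp
  define \<rho> where "\<rho> = \<alpha>0^2 * r"
  have rho0: "0 < \<rho>" unfolding \<rho>_def using al0 r0 by simp
  define D where "D = 4096 * exp 2 * (c2+1)"
  have D0: "0 < D" unfolding D_def using c1 c12 by (simp add: add_pos_pos)
  define \<tau> where "\<tau> = min 1 (sqrt (\<rho>/D))"
  have tau0: "0 < \<tau>" and tau1: "\<tau> \<le> 1" unfolding \<tau>_def using rho0 D0 by auto
  have tauR: "4*\<tau>^2*(512*exp 2*(c2+1)) \<le> \<rho>/2"
  proof -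
    have "\<tau>^2 \<le> (sqrt (\<rho>/D))^2" unfolding \<tau>_def using tau0 by (intro power_mono) (auto simp: \<tau>_def)
    also have "\<dots> = \<rho>/D" using rho0 D0 by simp
    finally have "\<tau>^2 * D \<le> \<rho>" using D0 by (simp add: pos_le_divide_eq)
    thus ?thesis unfolding D_def by (simp add: algebra_simps)
  qed
  define e where "e = \<epsilon>g/2"
  define \<Lambda> where "\<Lambda> N = C * ln N / p" for N
  have ev: "eventually (\<lambda>N. 1 \<le> N \<and> 8 \<le> c1*N \<and> 4 \<le> N powr (1+e) \<and> 16 * N powr (1+e) \<le> (c1*N)^2
     \<and> N powr (1+e) + 2 \<le> N^2 \<and> c2*N/4 + 2 \<le> N powr (1+e)
     \<and> 1 + (c2*N)^2/(8*N powr (1+e)) \<le> N powr (1+e)/2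
     \<and> sqrt (N * exp (-(N powr (1+e)/4-1)*((N powr (1+e)/4)/((c2*N)^2+N powr (1+e)/4)))) * (\<beta>0 * sqrt (N powr A)) * (1 + (N powr (1+e)+2)/(c1*N)) \<le> \<tau>/2
     \<and> N powr (1+e) + 2 \<le> c1*N*N powr \<epsilon>g \<and> 1 \<le> c1*N*N powr \<epsilon>g/2
     \<and> sqrt (N * exp (-(c1*N*N powr \<epsilon>g/2 - 1)*((c1*N*N powr \<epsilon>g/2)/((c2*N)^2 + c1*N*N powr \<epsilon>g/2)))) * (\<beta>0 * sqrt (N powr A)) * (1 + (2*(c2*N)^2+N powr (1+e)+2)/(c1*N)) \<le> \<tau>/20
     \<and> 4 * (C * ln N / p) + 2 * real K \<le> ((c1*N)^2/(16*N powr (1+e)) - 1) * \<tau>^2/500) at_top"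
    by (rule asym_conds[OF c1 c12 e_def eg0 eg1 be0 tau0 p0])
  then obtain N0 where N0: "\<And>N. N \<ge> N0 \<Longrightarrow> 1 \<le> N \<and> 8 \<le> c1*N \<and> 4 \<le> N powr (1+e) \<and> 16 * N powr (1+e) \<le> (c1*N)^2
     \<and> N powr (1+e) + 2 \<le> N^2 \<and> c2*N/4 + 2 \<le> N powr (1+e)
     \<and> 1 + (c2*N)^2/(8*N powr (1+e)) \<le> N powr (1+e)/2
     \<and> sqrt (N * exp (-(N powr (1+e)/4-1)*((N powr (1+e)/4)/((c2*N)^2+N powr (1+e)/4)))) * (\<beta>0 * sqrt (N powr A)) * (1 + (N powr (1+e)+2)/(c1*N)) \<le> \<tau>/2
     \<and> N powr (1+e) + 2 \<le> c1*N*N powr \<epsilon>g \<and> 1 \<le> c1*N*N powr \<epsilon>g/2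
     \<and> sqrt (N * exp (-(c1*N*N powr \<epsilon>g/2 - 1)*((c1*N*N powr \<epsilon>g/2)/((c2*N)^2 + c1*N*N powr \<epsilon>g/2)))) * (\<beta>0 * sqrt (N powr A)) * (1 + (2*(c2*N)^2+N powr (1+e)+2)/(c1*N)) \<le> \<tau>/20
     \<and> 4 * (C * ln N / p) + 2 * real K \<le> ((c1*N)^2/(16*N powr (1+e)) - 1) * \<tau>^2/500"
    unfolding eventually_at_top_linorder by blast
  show ?thesis
  proof (intro exI[of _ N0] allI impI)
    fix N :: real and n :: nat and x y :: real and I :: "nat set" and \<eta> :: "nat \<Rightarrow> real"
    assume NN0: "N0 \<le> N"
    assume H: "c2 * N \<le> sqrt (real n) - N \<and> x \<in> {c1 * N .. c2 * N}
            \<and> (d = 4 \<longrightarrow> y \<in> {c1 * N .. c2 * N} \<and> \<bar>x - y\<bar> \<ge> N powr \<epsilon>g)"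
    assume I: "I \<subseteq> {1..n}"
    assume cI: "card I \<le> K"
    assume eta: "r \<le> (\<Sum>j<d. (\<eta> j)^2) \<and> (\<Sum>j<d. (\<eta> j)^2) \<le> N powr A"
    note c = N0[OF NN0]
    have N1: "1 \<le> N" using c by simp
    define tt where "tt i = (\<Sum>j<d. weyl_w N x y i j * \<eta> j)" for i
    define S where "S = {1..n} - I"
    have finS: "finite S" unfolding S_def by simp
    have X: "c1*N \<le> x" "x \<le> c2*N" using H by auto
    have nb: "(c2+1)*N \<le> sqrt (real n)" using H by (simp add: algebra_simps)
    have Y4: "d = 4 \<longrightarrow> (c1*N \<le> y \<and> y \<le> c2*N \<and> N powr \<epsilon>g \<le> \<bar>x - y\<bar>)" using H by auto
    have L0: "0 \<le> C * ln N / p" using C0 N1 p0 by simp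
    have G: "4 * (C * ln N / p) \<le> (\<Sum>i\<in>S. 1 - cos (\<sigma> * tt i))"
      if sig: "a1 + a2 \<le> \<sigma>" "\<sigma> \<le> b1 + b2" for \<sigma>
    proof -
      have sa: "\<alpha>0 \<le> \<sigma>" "\<sigma> \<le> \<beta>0" using sig unfolding \<alpha>0_def \<beta>0_def by auto
      have s0: "0 < \<sigma>" using sa al0 by linarith
      have Sg: "r \<le> (\<Sum>j<d. (\<eta> j)^2)" "(\<Sum>j<d. (\<eta> j)^2) \<le> N powr A" using eta by auto
      have sq1: "\<alpha>0^2 \<le> \<sigma>^2" using sa al0 by (intro power_mono) auto
      have sq2: "\<sigma>^2 \<le> \<beta>0^2" using sa s0 by (intro power_mono) auto
      have Srho: "\<rho> \<le> \<sigma>^2 * (\<Sum>j<d. (\<eta> j)^2)"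
        unfolding \<rho>_def using sq1 Sg r0 by (intro mult_mono) auto
      have "\<sigma>^2 * (\<Sum>j<d. (\<eta> j)^2) \<le> \<beta>0^2 * N powr A"
        using sq2 Sg r0 by (intro mult_mono) auto
      hence "sqrt (\<sigma>^2 * (\<Sum>j<d. (\<eta> j)^2)) \<le> sqrt (\<beta>0^2 * N powr A)" by (rule real_sqrt_le_mono)
      also have "\<dots> = \<beta>0 * sqrt (N powr A)" using be0 by (simp add: real_sqrt_mult)
      finally have SUb: "sqrt (\<sigma>^2 * (\<Sum>j<d. (\<eta> j)^2)) \<le> \<beta>0 * sqrt (N powr A)" .
      have full: "((c1*N)^2/(16*N powr (1+e)) - 1) * \<tau>^2/500 \<le> (\<Sum>i\<in>{1..n}. 1 - cos (\<sigma> * tt i))"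
        unfolding tt_def
        by (rule G_bound[OF dd N1 c1 less_imp_le[OF c12] X _ nb tau0 tau1 tauR Srho SUb, of "N powr (1+e)"])
           (use c Y4 in auto)
      have split: "(\<Sum>i\<in>{1..n}. 1 - cos (\<sigma> * tt i)) = (\<Sum>i\<in>S. 1 - cos (\<sigma> * tt i)) + (\<Sum>i\<in>I. 1 - cos (\<sigma> * tt i))"
        unfolding S_def by (rule sum.subset_diff[OF I]) simp
      have "(\<Sum>i\<in>I. 1 - cos (\<sigma> * tt i)) \<le> real (card I) * 2"
        by (rule sum_bounded_above) (smt (verit) cos_ge_minus_one)
      also have "\<dots> \<le> real K * 2" using cI by simp
      finally have IK: "(\<Sum>i\<in>I. 1 - cos (\<sigma> * tt i)) \<le> 2 * real K" by simp
      have "4 * (C * ln N / p) + 2 * real K \<le> ((c1*N)^2/(16*N powr (1+e)) - 1) * \<tau>^2/500" using c by simp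
      thus ?thesis using full split IK by linarith
    qed
    have pm1: "p \<le> measure M {\<omega>\<in>space M. a1 \<le> \<xi> \<omega> \<and> \<xi> \<omega> \<le> b1}" unfolding p_def by simp
    have pm2: "p \<le> measure M {\<omega>\<in>space M. -b2 \<le> \<xi> \<omega> \<and> \<xi> \<omega> \<le> -a2}" unfolding p_def by simp
    have main: "(\<Prod>i\<in>S. cmod (\<integral>\<omega>. exp (\<i> * complex_of_real (\<xi> \<omega> * tt i)) \<partial>M)) \<le> exp (-(p * (C * ln N / p)))"
      by (rule prob_main[OF P xi finS pm1 pm2 L0 G])
    have "norm (\<Prod>i\<in>{1..n} - I. weyl_phi M \<xi> d N x y i \<eta>) = (\<Prod>i\<in>S. cmod (\<integral>\<omega>. exp (\<i> * complex_of_real (\<xi> \<omega> * tt i)) \<partial>M))"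
      unfolding S_def tt_def weyl_phi_def by (simp add: prod_norm)
    also have "\<dots> \<le> exp (-(p * (C * ln N / p)))" by (rule main)
    also have "\<dots> = N powr (- C)" using p0 N1 by (simp add: powr_def)
    finally show "norm (\<Prod>i\<in>{1..n} - I. weyl_phi M \<xi> d N x y i \<eta>) \<le> N powr (- C)" .
  qed
qed

end
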